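(* In $U(sl(3))$ let $A=E_{12}$, $B=E_{23}$, $E=E_{13}$, $H^{\mathcal P}=\frac13(2E_{11}-E_{22}-E_{33})$, $H^\perp=\frac13(E_{11}-2E_{22}+E_{33})$, $\sigma=\ln(1+\xi E)$, and for $c\in\mathbb C$, $\sigma_A(c)=\ln(1+\xi cA)$. Then for all $c,\zeta\in\mathbb C$ both $$\mathcal F^{\mathcal P}_{\mathcal{JE}}=e^{H^\perp\otimes\sigma_A(c)}\,e^{\xi A\otimes B}\,e^{H^{\mathcal P}\otimes\sigma}\qquad\text{and}\qquad\mathcal F_{\mathcal{RE}}=e^{\zeta H^\perp\otimes\sigma}\,e^{\xi A\otimes B}\,e^{H^{\mathcal P}\otimes\sigma}$$ are twists for $U(sl(3))$, i.e. invertible elements satisfying $\mathcal F_{12}(\Delta\otimes\mathrm{id})(\mathcal F)=\mathcal F_{23}(\mathrm{id}\otimes\Delta)(\mathcal F)$ and $(\epsilon\otimes\mathrm{id})(\mathcal F)=(\mathrm{id}\otimes\epsilon)(\mathcal F)=1$.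
   Context: Work over $\mathbb C$ with $U=U(sl(3))$, with primitive generators ($\Delta(x)=x\otimes1+1\otimes x$, $\epsilon(x)=0$). $E_{ij}$ are matrix units of $gl(3)$. $\xi$ is a formal parameter and all computations are in the $\xi$-adically completed algebras $U[[\xi]]$, $(U^{\otimes2})[[\xi]]$, $(U^{\otimes3})[[\xi]]$; $\ln(1+\xi X)$ denotes the formal power series $\sum_{m\ge1}(-1)^{m+1}\xi^mX^m/m$. *)

theory Defs
  imports "HOL-Analysis.Analysis" "HOL-Library.Poly_Mapping"
          "HOL-Computational_Algebra.Formal_Power_Series"
begin

typedef sl3 = "{M :: complex^3^3. trace M = 0}"
  by (rule exI[of _ "mat 0"]) (simp add: trace_def)

definition msc :: "complex \<Rightarrow> complex^3^3 \<Rightarrow> complex^3^3" where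
  "msc c M = (\<chi> a b. c * M $ a $ b)"

definition sl_add :: "sl3 \<Rightarrow> sl3 \<Rightarrow> sl3" where
  "sl_add x y = Abs_sl3 (Rep_sl3 x + Rep_sl3 y)"

definition sl_scale :: "complex \<Rightarrow> sl3 \<Rightarrow> sl3" where
  "sl_scale c x = Abs_sl3 (msc c (Rep_sl3 x))"

definition sl_bracket :: "sl3 \<Rightarrow> sl3 \<Rightarrow> sl3" where
  "sl_bracket x y = Abs_sl3 (Rep_sl3 x ** Rep_sl3 y - Rep_sl3 y ** Rep_sl3 x)"

definition mu :: "3 \<Rightarrow> 3 \<Rightarrow> complex^3^3" where
  "mu i j = (\<chi> a b. if a = i \<and> b = j then 1 else 0)"

datatype 'l word = Word "'l list"

primrec unword :: "'l word \<Rightarrow> 'l list" where "unword (Word xs) = xs"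

instantiation word :: (type) monoid_add
begin
definition zero_word :: "'l word" where "zero_word = Word []"
definition plus_word :: "'l word \<Rightarrow> 'l word \<Rightarrow> 'l word" where
  "plus_word v w = Word (unword v @ unword w)"
instance
proof
  fix a b c :: "'l word"
  show "a + b + c = a + (b + c)" by (cases a; cases b; cases c) (simp add: plus_word_def)
  show "0 + a = a" by (cases a) (simp add: plus_word_def zero_word_def)
  show "a + 0 = a" by (cases a) (simp add: plus_word_def zero_word_def)
qed
end

text \<open>Letters (k, x): the element x of sl(3) placed in the k-th tensor factor.
  The free algebra on these letters, modulo the ideal \<open>Irel\<close> below, is
  U(sl(3))^{\<otimes>\<infinity>} (restricted tensor power); its subalgebra generated by letters
  with k < n is U(sl(3))^{\<otimes>n}.\<close>
type_synonym letter = "nat \<times> sl3"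
type_synonym FA = "letter word \<Rightarrow>\<^sub>0 complex"
type_synonym UF = "FA fps"   \<comment> \<open>xi-adically completed algebra, coefficientwise\<close>

definition scal :: "complex \<Rightarrow> FA" where
  "scal c = Poly_Mapping.single (Word []) c"

definition L :: "nat \<Rightarrow> sl3 \<Rightarrow> FA" where
  "L k x = Poly_Mapping.single (Word [(k, x)]) 1"

inductive_set Irel :: "FA set" where
  lin_add: "L k (sl_add x y) - L k x - L k y \<in> Irel"
| lin_scale: "L k (sl_scale c x) - scal c * L k x \<in> Irel"
| lie: "L k x * L k y - L k y * L k x - L k (sl_bracket x y) \<in> Irel"
| comm: "k \<noteq> l \<Longrightarrow> L k x * L l y - L l y * L k x \<in> Irel"
| zero: "0 \<in> Irel"
| add: "a \<in> Irel \<Longrightarrow> b \<in> Irel \<Longrightarrow> a + b \<in> Irel"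
| mult: "a \<in> Irel \<Longrightarrow> p * a * q \<in> Irel"

definition eqv :: "UF \<Rightarrow> UF \<Rightarrow> bool" where
  "eqv F G \<longleftrightarrow> (\<forall>n. fps_nth F n - fps_nth G n \<in> Irel)"

definition fa_hom :: "(letter \<Rightarrow> FA) \<Rightarrow> FA \<Rightarrow> FA" where
  "fa_hom \<phi> p = (\<Sum>w\<in>Poly_Mapping.keys p. scal (Poly_Mapping.lookup p w) * prod_list (map \<phi> (unword w)))"

definition uf_hom :: "(letter \<Rightarrow> FA) \<Rightarrow> UF \<Rightarrow> UF" where
  "uf_hom \<phi> F = Abs_fps (\<lambda>n. fa_hom \<phi> (fps_nth F n))"

definition leg :: "nat \<Rightarrow> UF \<Rightarrow> UF" where
  "leg k = uf_hom (\<lambda>(i, x). L (i + k) x)"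

definition tens2 :: "UF \<Rightarrow> UF \<Rightarrow> UF" where
  "tens2 X Y = leg 0 X * leg 1 Y"

text \<open>exp and ln(1+_) of power series without constant term.\<close>
definition fexp :: "UF \<Rightarrow> UF" where
  "fexp X = Abs_fps (\<lambda>n. \<Sum>m\<le>n. scal (1 / of_nat (fact m)) * (fps_nth (X ^ m) n))"

definition fln1 :: "UF \<Rightarrow> UF" where
  "fln1 X = Abs_fps (\<lambda>n. \<Sum>m\<in>{1..n}. scal ((-1) ^ (m + 1) / of_nat m) * (fps_nth (X ^ m) n))"

definition Delta_id :: "UF \<Rightarrow> UF" where
  "Delta_id = uf_hom (\<lambda>(i, x). if i = 0 then L 0 x + L 1 x else L (i + 1) x)"

definition id_Delta :: "UF \<Rightarrow> UF" where
  "id_Delta = uf_hom (\<lambda>(i, x). if i = 0 then L 0 x else if i = 1 then L 1 x + L 2 x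
                               else L (i + 1) x)"

definition leg12 :: "UF \<Rightarrow> UF" where
  "leg12 = uf_hom (\<lambda>(i, x). L i x)"

definition leg23 :: "UF \<Rightarrow> UF" where
  "leg23 = uf_hom (\<lambda>(i, x). L (i + 1) x)"

definition eps_id :: "UF \<Rightarrow> UF" where
  "eps_id = uf_hom (\<lambda>(i, x). if i = 0 then 0 else L (i - 1) x)"

definition id_eps :: "UF \<Rightarrow> UF" where
  "id_eps = uf_hom (\<lambda>(i, x). if i = 1 then 0 else if i = 0 then L 0 x else L (i - 1) x)"

definition is_twist :: "UF \<Rightarrow> bool" where
  "is_twist F \<longleftrightarrow>
     (\<exists>G. eqv (F * G) 1 \<and> eqv (G * F) 1) \<and>
     eqv (leg12 F * Delta_id F) (leg23 F * id_Delta F) \<and>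
     eqv (eps_id F) 1 \<and> eqv (id_eps F) 1"

definition Aelt :: sl3 where "Aelt = Abs_sl3 (mu 1 2)"
definition Belt :: sl3 where "Belt = Abs_sl3 (mu 2 3)"
definition Eelt :: sl3 where "Eelt = Abs_sl3 (mu 1 3)"
definition HP :: sl3 where
  "HP = Abs_sl3 (msc (1/3) (msc 2 (mu 1 1) - mu 2 2 - mu 3 3))"
definition Hperp :: sl3 where
  "Hperp = Abs_sl3 (msc (1/3) (mu 1 1 - msc 2 (mu 2 2) + mu 3 3))"

definition U :: "sl3 \<Rightarrow> UF" where "U x = fps_const (L 0 x)"
definition Uc :: "complex \<Rightarrow> UF" where "Uc c = fps_const (scal c)"

definition sigma :: UF where "sigma = fln1 (fps_X * U Eelt)"
definition sigmaA :: "complex \<Rightarrow> UF" where "sigmaA c = fln1 (fps_X * Uc c * U Aelt)"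

definition F_JE :: "complex \<Rightarrow> UF" where
  "F_JE c = fexp (tens2 (U Hperp) (sigmaA c)) * fexp (fps_X * tens2 (U Aelt) (U Belt))
            * fexp (tens2 (U HP) sigma)"

definition F_RE :: "complex \<Rightarrow> UF" where
  "F_RE \<zeta> = fexp (tens2 (Uc \<zeta> * U Hperp) sigma) * fexp (fps_X * tens2 (U Aelt) (U Belt))
            * fexp (tens2 (U HP) sigma)"

end

theory Submission
  imports Defs
begin


lemma scal_eq: "scal c = Poly_Mapping.single 0 c" by (simp add: scal_def zero_word_def)
lemma scal_0[simp]: "scal 0 = 0" by (simp add: scal_eq)
lemma scal_1[simp]: "scal 1 = 1" by (simp add: scal_eq)
lemma scal_add: "scal (a+b) = scal a + scal b" by (simp add: scal_eq single_add)
lemma scal_mult: "scal (a*b) = scal a * scal b" by (simp add: scal_eq mult_single)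
lemma scal_uminus: "scal (-a) = - scal a" by (simp add: scal_eq single_uminus)
lemma scal_diff: "scal (a-b) = scal a - scal b" by (simp add: scal_eq single_diff)

lemma pm_expand: "(p::FA) = (\<Sum>w\<in>Poly_Mapping.keys p. Poly_Mapping.single w (Poly_Mapping.lookup p w))"
proof (rule poly_mapping_eqI)
  fix i
  show "Poly_Mapping.lookup p i = Poly_Mapping.lookup (\<Sum>w\<in>Poly_Mapping.keys p. Poly_Mapping.single w (Poly_Mapping.lookup p w)) i"
    by (simp add: lookup_sum lookup_single when_def in_keys_iff)
qed

lemma scal_single_comm: "scal c * Poly_Mapping.single w a = Poly_Mapping.single w a * scal c"
  by (simp add: scal_eq mult_single mult.commute)

lemma scal_central: "scal c * (p::FA) = p * scal c"
proof -
  have "scal c * p = (\<Sum>w\<in>Poly_Mapping.keys p. scal c * Poly_Mapping.single w (Poly_Mapping.lookup p w))"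
    by (subst pm_expand) (simp add: sum_distrib_left)
  also have "\<dots> = (\<Sum>w\<in>Poly_Mapping.keys p. Poly_Mapping.single w (Poly_Mapping.lookup p w) * scal c)"
    by (simp add: scal_single_comm)
  also have "\<dots> = p * scal c"
    by (subst (3) pm_expand) (simp add: sum_distrib_right)
  finally show ?thesis .
qed

definition Mw :: "(letter \<Rightarrow> FA) \<Rightarrow> letter word \<Rightarrow> FA" where
  "Mw \<phi> w = prod_list (map \<phi> (unword w))"

lemma Mw_plus: "Mw \<phi> (v + w) = Mw \<phi> v * Mw \<phi> w"
  by (cases v; cases w) (simp add: Mw_def plus_word_def)

lemma fa_hom_superset:
  assumes "finite S" "Poly_Mapping.keys p \<subseteq> S"
  shows "fa_hom \<phi> p = (\<Sum>w\<in>S. scal (Poly_Mapping.lookup p w) * Mw \<phi> w)"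
  unfolding fa_hom_def Mw_def
  by (rule sum.mono_neutral_left) (use assms in \<open>auto simp: in_keys_iff\<close>)

lemma fa_hom_0[simp]: "fa_hom \<phi> 0 = 0" by (simp add: fa_hom_def)

lemma fa_hom_add: "fa_hom \<phi> (p + q) = fa_hom \<phi> p + fa_hom \<phi> q"
proof -
  let ?S = "Poly_Mapping.keys p \<union> Poly_Mapping.keys q"
  have f: "finite ?S" by simp
  have "fa_hom \<phi> (p+q) = (\<Sum>w\<in>?S. scal (Poly_Mapping.lookup (p+q) w) * Mw \<phi> w)"
    by (rule fa_hom_superset[OF f]) (simp add: keys_add)
  also have "\<dots> = (\<Sum>w\<in>?S. scal (Poly_Mapping.lookup p w) * Mw \<phi> w) + (\<Sum>w\<in>?S. scal (Poly_Mapping.lookup q w) * Mw \<phi> w)"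
    by (simp add: lookup_add scal_add distrib_right sum.distrib)
  also have "\<dots> = fa_hom \<phi> p + fa_hom \<phi> q"
    by (simp add: fa_hom_superset[OF f])
  finally show ?thesis .
qed

lemma fa_hom_sum: "fa_hom \<phi> (\<Sum>i\<in>I. f i) = (\<Sum>i\<in>I. fa_hom \<phi> (f i))"
  by (induct I rule: infinite_finite_induct) (auto simp: fa_hom_add)

lemma fa_hom_single: "fa_hom \<phi> (Poly_Mapping.single w a) = scal a * Mw \<phi> w"
proof -
  have "fa_hom \<phi> (Poly_Mapping.single w a) = (\<Sum>v\<in>{w}. scal (Poly_Mapping.lookup (Poly_Mapping.single w a) v) * Mw \<phi> v)"
    by (rule fa_hom_superset) auto
  then show ?thesis by simp
qed

lemma scal_swap_aux: "scal b * (X * Y) = X * (scal b * Y)"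
  by (simp only: mult.assoc[symmetric] scal_central[of b X])

lemma scal_swap_aux2: "scal (a*b) * (X * Y) = scal a * X * (scal b * Y)"
  by (simp only: scal_mult mult.assoc scal_swap_aux[of b X])

lemma fa_hom_mult: "fa_hom \<phi> (p * q) = fa_hom \<phi> p * fa_hom \<phi> q"
proof -
  let ?P = "Poly_Mapping.keys p" and ?Q = "Poly_Mapping.keys q"
  have "p * q = (\<Sum>v\<in>?P. Poly_Mapping.single v (Poly_Mapping.lookup p v)) * (\<Sum>w\<in>?Q. Poly_Mapping.single w (Poly_Mapping.lookup q w))"
    using pm_expand[of p] pm_expand[of q] by simp
  also have "\<dots> = (\<Sum>v\<in>?P. \<Sum>w\<in>?Q. Poly_Mapping.single (v+w) (Poly_Mapping.lookup p v * Poly_Mapping.lookup q w))"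
    by (simp only: sum_product mult_single)
  finally have pq: "p * q = \<dots>" .
  have "fa_hom \<phi> (p*q) = (\<Sum>v\<in>?P. \<Sum>w\<in>?Q. scal (Poly_Mapping.lookup p v) * Mw \<phi> v * (scal (Poly_Mapping.lookup q w) * Mw \<phi> w))"
    unfolding pq fa_hom_sum fa_hom_single Mw_plus
    by (intro sum.cong refl) (rule scal_swap_aux2)
  also have "\<dots> = fa_hom \<phi> p * fa_hom \<phi> q"
    by (simp only: fa_hom_def Mw_def sum_product mult.assoc)
  finally show ?thesis .
qed

lemma fa_hom_scal[simp]: "fa_hom \<phi> (scal c) = scal c"
  by (simp add: scal_eq fa_hom_single Mw_def zero_word_def)

lemma fa_hom_one[simp]: "fa_hom \<phi> 1 = 1"
  using fa_hom_scal[of \<phi> 1] by simp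

lemma fa_hom_L[simp]: "fa_hom \<phi> (L k x) = \<phi> (k, x)"
  by (simp add: L_def fa_hom_single Mw_def)

lemma fa_hom_uminus: "fa_hom \<phi> (- p) = - fa_hom \<phi> p"
proof -
  have "fa_hom \<phi> (- p) + fa_hom \<phi> p = fa_hom \<phi> (- p + p)" by (rule fa_hom_add[symmetric])
  also have "\<dots> = 0" by simp
  finally show ?thesis by (rule eq_neg_iff_add_eq_0[THEN iffD2])
qed

lemma fa_hom_diff: "fa_hom \<phi> (p - q) = fa_hom \<phi> p - fa_hom \<phi> q"
  by (simp only: diff_conv_add_uminus fa_hom_add fa_hom_uminus)


lemma uf_hom_nth[simp]: "fps_nth (uf_hom \<phi> F) n = fa_hom \<phi> (fps_nth F n)"
  by (simp add: uf_hom_def)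

lemma uf_hom_add: "uf_hom \<phi> (F + G) = uf_hom \<phi> F + uf_hom \<phi> G"
  by (rule fps_ext) (simp add: fa_hom_add)

lemma uf_hom_diff: "uf_hom \<phi> (F - G) = uf_hom \<phi> F - uf_hom \<phi> G"
  by (rule fps_ext) (simp add: fa_hom_diff)

lemma uf_hom_mult: "uf_hom \<phi> (F * G) = uf_hom \<phi> F * uf_hom \<phi> G"
  by (rule fps_ext) (simp add: fps_mult_nth fa_hom_sum fa_hom_mult)

lemma uf_hom_one: "uf_hom \<phi> 1 = 1"
  by (rule fps_ext) (simp add: fps_one_nth)

lemma uf_hom_zero: "uf_hom \<phi> 0 = 0"
  by (rule fps_ext) simp

lemma uf_hom_const: "uf_hom \<phi> (fps_const a) = fps_const (fa_hom \<phi> a)"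
  by (rule fps_ext) simp

lemma uf_hom_X: "uf_hom \<phi> fps_X = fps_X"
  by (rule fps_ext) (simp add: fps_X_nth)

lemma uf_hom_power: "uf_hom \<phi> (F ^ m) = uf_hom \<phi> F ^ m"
  by (induct m) (simp_all add: uf_hom_one uf_hom_mult)

lemma uf_hom_fexp: "uf_hom \<phi> (fexp X) = fexp (uf_hom \<phi> X)"
proof (rule fps_ext)
  fix n
  have "fa_hom \<phi> (fps_nth (X ^ m) n) = fps_nth (uf_hom \<phi> X ^ m) n" for m
    by (simp flip: uf_hom_power)
  then show "fps_nth (uf_hom \<phi> (fexp X)) n = fps_nth (fexp (uf_hom \<phi> X)) n"
    by (simp add: fexp_def fa_hom_sum fa_hom_mult)
qed

lemma uf_hom_fln1: "uf_hom \<phi> (fln1 X) = fln1 (uf_hom \<phi> X)"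
proof (rule fps_ext)
  fix n
  have "fa_hom \<phi> (fps_nth (X ^ m) n) = fps_nth (uf_hom \<phi> X ^ m) n" for m
    by (simp flip: uf_hom_power)
  then show "fps_nth (uf_hom \<phi> (fln1 X)) n = fps_nth (fln1 (uf_hom \<phi> X)) n"
    by (simp add: fln1_def fa_hom_sum fa_hom_mult)
qed

section \<open>The ideal and the quotient ring\<close>

definition reln :: "FA \<Rightarrow> FA \<Rightarrow> bool" where "reln a b \<longleftrightarrow> a - b \<in> Irel"

lemma Irel_multL: "a \<in> Irel \<Longrightarrow> p * a \<in> Irel"
  using Irel.mult[of a p 1] by simp
lemma Irel_multR: "a \<in> Irel \<Longrightarrow> a * q \<in> Irel"
  using Irel.mult[of a 1 q] by simp
lemma Irel_uminus: "a \<in> Irel \<Longrightarrow> - a \<in> Irel"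
  using Irel_multL[of a "-1"] by simp
lemma Irel_diff: "a \<in> Irel \<Longrightarrow> b \<in> Irel \<Longrightarrow> a - b \<in> Irel"
  using Irel.add[of a "-b"] Irel_uminus[of b] by simp

definition epsF :: "FA \<Rightarrow> FA" where "epsF = fa_hom (\<lambda>_. 0)"

lemma epsF_Irel: "a \<in> Irel \<Longrightarrow> epsF a = 0"
proof (induct rule: Irel.induct)
  case (mult a p q)
  then show ?case by (simp add: epsF_def fa_hom_mult)
qed (simp_all add: epsF_def fa_hom_mult fa_hom_diff fa_hom_add)

lemma one_notin_Irel: "(1::FA) \<notin> Irel"
proof
  assume "(1::FA) \<in> Irel"
  then have "epsF 1 = 0" by (rule epsF_Irel)
  then show False by (simp add: epsF_def)
qed

lemma equivp_reln: "equivp reln"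
proof (rule equivpI)
  show "reflp reln" by (simp add: reflp_def reln_def Irel.zero)
  show "symp reln" unfolding symp_def reln_def
  proof (intro allI impI)
    fix x y :: FA assume "x - y \<in> Irel"
    then have "- (x - y) \<in> Irel" by (rule Irel_uminus)
    then show "y - x \<in> Irel" by simp
  qed
  show "transp reln" unfolding transp_def reln_def
  proof (intro allI impI)
    fix x y z :: FA assume "x - y \<in> Irel" "y - z \<in> Irel"
    then have "(x - y) + (y - z) \<in> Irel" by (rule Irel.add)
    then show "x - z \<in> Irel" by simp
  qed
qed

quotient_type uq = FA / reln by (rule equivp_reln)

instantiation uq :: ring_1
begin

lift_definition zero_uq :: uq is "0::FA" .
lift_definition one_uq :: uq is "1::FA" .
lift_definition plus_uq :: "uq \<Rightarrow> uq \<Rightarrow> uq" is "(+)"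
  unfolding reln_def
proof -
  fix a b c d :: FA assume "a - b \<in> Irel" "c - d \<in> Irel"
  then have "(a - b) + (c - d) \<in> Irel" by (rule Irel.add)
  then show "a + c - (b + d) \<in> Irel" by (simp add: algebra_simps)
qed
lift_definition uminus_uq :: "uq \<Rightarrow> uq" is "uminus"
  unfolding reln_def
proof -
  fix a b :: FA assume "a - b \<in> Irel"
  then have "- (a - b) \<in> Irel" by (rule Irel_uminus)
  then show "- a - - b \<in> Irel" by (simp add: algebra_simps)
qed
lift_definition minus_uq :: "uq \<Rightarrow> uq \<Rightarrow> uq" is "(-)"
  unfolding reln_def
proof -
  fix a b c d :: FA assume "a - b \<in> Irel" "c - d \<in> Irel"
  then have "(a - b) - (c - d) \<in> Irel" by (rule Irel_diff)
  then show "a - c - (b - d) \<in> Irel" by (simp add: algebra_simps)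
qed
lift_definition times_uq :: "uq \<Rightarrow> uq \<Rightarrow> uq" is "(*)"
  unfolding reln_def
proof -
  fix a b c d :: FA assume "a - b \<in> Irel" "c - d \<in> Irel"
  then have "(a - b) * c + b * (c - d) \<in> Irel" by (intro Irel.add Irel_multL Irel_multR)
  then show "a * c - b * d \<in> Irel" by (simp add: algebra_simps)
qed

instance
proof
  fix a b c :: uq
  show "a + b + c = a + (b + c)" by transfer (simp add: reln_def algebra_simps Irel.zero)
  show "a + b = b + a" by transfer (simp add: reln_def algebra_simps Irel.zero)
  show "0 + a = a" by transfer (simp add: reln_def Irel.zero)
  show "- a + a = 0" by transfer (simp add: reln_def Irel.zero)
  show "a - b = a + - b" by transfer (simp add: reln_def Irel.zero)
  show "a * b * c = a * (b * c)" by transfer (simp add: reln_def algebra_simps Irel.zero)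
  show "1 * a = a" by transfer (simp add: reln_def Irel.zero)
  show "a * 1 = a" by transfer (simp add: reln_def Irel.zero)
  show "(a + b) * c = a * c + b * c" by transfer (simp add: reln_def algebra_simps Irel.zero)
  show "a * (b + c) = a * b + a * c" by transfer (simp add: reln_def algebra_simps Irel.zero)
  show "(0::uq) \<noteq> 1" by transfer (use one_notin_Irel Irel_uminus in \<open>fastforce simp: reln_def\<close>)
qed

end

lemma abs_uq_add: "abs_uq (a + b) = abs_uq a + abs_uq b" by (simp add: plus_uq.abs_eq)
lemma abs_uq_mult: "abs_uq (a * b) = abs_uq a * abs_uq b" by (simp add: times_uq.abs_eq)
lemma abs_uq_diff: "abs_uq (a - b) = abs_uq a - abs_uq b" by (simp add: minus_uq.abs_eq)
lemma abs_uq_uminus: "abs_uq (- a) = - abs_uq a" by (simp add: uminus_uq.abs_eq)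
lemma abs_uq_0[simp]: "abs_uq 0 = 0" by (simp add: zero_uq.abs_eq)
lemma abs_uq_1[simp]: "abs_uq 1 = 1" by (simp add: one_uq.abs_eq)
lemma abs_uq_eq_iff: "abs_uq a = abs_uq b \<longleftrightarrow> a - b \<in> Irel"
  using uq.abs_eq_iff reln_def by metis

lemma abs_uq_sum: "abs_uq (\<Sum>i\<in>I. f i) = (\<Sum>i\<in>I. abs_uq (f i))"
  by (induct I rule: infinite_finite_induct) (simp_all add: abs_uq_add)


definition PiQ :: "UF \<Rightarrow> uq fps" where "PiQ F = Abs_fps (\<lambda>n. abs_uq (fps_nth F n))"

lemma Pi_nth[simp]: "fps_nth (PiQ F) n = abs_uq (fps_nth F n)"
  by (simp add: PiQ_def)

lemma Pi_add: "PiQ (F + G) = PiQ F + PiQ G"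
  by (rule fps_ext) (simp add: abs_uq_add)
lemma Pi_diff: "PiQ (F - G) = PiQ F - PiQ G"
  by (rule fps_ext) (simp add: abs_uq_diff)
lemma Pi_mult: "PiQ (F * G) = PiQ F * PiQ G"
  by (rule fps_ext) (simp add: fps_mult_nth abs_uq_sum abs_uq_mult)
lemma Pi_one: "PiQ 1 = 1"
  by (rule fps_ext) simp
lemma Pi_zero: "PiQ 0 = 0"
  by (rule fps_ext) simp
lemma Pi_const: "PiQ (fps_const a) = fps_const (abs_uq a)"
  by (rule fps_ext) simp
lemma Pi_X: "PiQ fps_X = fps_X"
  by (rule fps_ext) (simp add: fps_X_nth)
lemma Pi_power: "PiQ (F ^ m) = PiQ F ^ m"
  by (induct m) (simp_all add: Pi_one Pi_mult)

lemma eqv_iff: "eqv F G \<longleftrightarrow> PiQ F = PiQ G"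
  by (simp add: eqv_def fps_eq_iff abs_uq_eq_iff)

definition qs :: "complex \<Rightarrow> uq" where "qs c = abs_uq (scal c)"

lemma qs_central_abs: "qs c * abs_uq x = abs_uq x * qs c"
proof -
  have "qs c * abs_uq x = abs_uq (scal c * x)" by (simp add: qs_def abs_uq_mult)
  also have "\<dots> = abs_uq (x * scal c)" by (simp add: scal_central)
  also have "\<dots> = abs_uq x * qs c" by (simp add: qs_def abs_uq_mult)
  finally show ?thesis .
qed

lemma qs_central: "qs c * x = x * qs c"
  by (induct x rule: uq.abs_induct) (rule qs_central_abs)

lemma qs_add: "qs (a + b) = qs a + qs b" by (simp add: qs_def scal_add abs_uq_add)
lemma qs_mult: "qs (a * b) = qs a * qs b" by (simp add: qs_def scal_mult abs_uq_mult)
lemma qs_diff: "qs (a - b) = qs a - qs b" by (simp add: qs_def scal_diff abs_uq_diff)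
lemma qs_uminus: "qs (- a) = - qs a" by (simp add: qs_def scal_uminus abs_uq_uminus)
lemma qs_0[simp]: "qs 0 = 0" by (simp add: qs_def)
lemma qs_1[simp]: "qs 1 = 1" by (simp add: qs_def)

definition cs :: "complex \<Rightarrow> uq fps" where "cs c = fps_const (qs c)"

lemma cs_central: "cs c * Y = Y * cs c"
  by (rule fps_ext) (simp add: cs_def qs_central)

definition qsub :: "(nat \<Rightarrow> complex) \<Rightarrow> uq fps \<Rightarrow> uq fps" where
  "qsub a Y = Abs_fps (\<lambda>n. \<Sum>m\<le>n. qs (a m) * fps_nth (Y ^ m) n)"

lemma qsub_nth: "fps_nth (qsub a Y) n = (\<Sum>m\<le>n. qs (a m) * fps_nth (Y ^ m) n)"
  by (simp add: qsub_def)

definition ec :: "nat \<Rightarrow> complex" where "ec m = 1 / of_nat (fact m)"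
definition lnc :: "nat \<Rightarrow> complex" where
  "lnc m = (if m = 0 then 0 else (-1) ^ (m + 1) / of_nat m)"

abbreviation qexp :: "uq fps \<Rightarrow> uq fps" where "qexp \<equiv> qsub ec"
abbreviation qln :: "uq fps \<Rightarrow> uq fps" where "qln \<equiv> qsub lnc"

lemma Pi_fexp: "PiQ (fexp X) = qexp (PiQ X)"
  by (rule fps_ext) (simp add: fexp_def qsub_nth ec_def abs_uq_sum abs_uq_mult qs_def Pi_power[symmetric])

lemma Pi_fln1: "PiQ (fln1 X) = qln (PiQ X)"
proof (rule fps_ext)
  fix n
  have "fps_nth (qln (PiQ X)) n = (\<Sum>m\<in>insert 0 {1..n}. qs (lnc m) * fps_nth (PiQ X ^ m) n)"
    unfolding qsub_nth by (rule sum.cong) auto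
  also have "\<dots> = (\<Sum>m\<in>{1..n}. qs (lnc m) * fps_nth (PiQ X ^ m) n)"
    by (simp add: lnc_def)
  also have "\<dots> = fps_nth (PiQ (fln1 X)) n"
    by (simp add: fln1_def lnc_def abs_uq_sum abs_uq_mult qs_def Pi_power[symmetric])
  finally show "fps_nth (PiQ (fln1 X)) n = fps_nth (qln (PiQ X)) n" ..
qed

definition lu :: "nat \<Rightarrow> sl3 \<Rightarrow> uq" where "lu k x = abs_uq (L k x)"

lemma lu_comm: "k \<noteq> j \<Longrightarrow> lu k x * lu j y = lu j y * lu k x"
  unfolding lu_def abs_uq_mult[symmetric] abs_uq_eq_iff by (rule Irel.comm)

lemma lu_lie: "lu k x * lu k y = lu k y * lu k x + lu k (sl_bracket x y)"
proof -
  have "abs_uq (L k x * L k y - L k y * L k x) = abs_uq (L k (sl_bracket x y))"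
    unfolding abs_uq_eq_iff by (rule Irel.lie)
  then show ?thesis unfolding lu_def abs_uq_mult abs_uq_diff by (simp add: algebra_simps)
qed

lemma lu_scale: "lu k (sl_scale c x) = qs c * lu k x"
proof -
  have "abs_uq (L k (sl_scale c x)) = abs_uq (scal c * L k x)"
    unfolding abs_uq_eq_iff by (rule Irel.lin_scale)
  then show ?thesis unfolding lu_def qs_def abs_uq_mult by simp
qed

section \<open>Computations in sl(3)\<close>

lemma trace_mu: "trace (mu i j) = (if i = j then 1 else 0)"
  using exhaust_3[of i] exhaust_3[of j] by (auto simp: trace_def sum_3 mu_def)

lemma mat_eqI3: "(\<And>a b. a \<in> {1,2,3} \<Longrightarrow> b \<in> {1,2,3} \<Longrightarrow> M $ a $ b = N $ a $ b) \<Longrightarrow> M = (N::complex^3^3)"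
  by (simp add: vec_eq_iff forall_3)

definition mH where "mH = msc (1/3) (msc 2 (mu 1 1) - mu 2 2 - mu 3 3)"
definition mK where "mK = msc (1/3) (mu 1 1 - msc 2 (mu 2 2) + mu 3 3)"

lemma trace_msc: "trace (msc c M) = c * trace M"
  by (simp add: trace_def msc_def sum_distrib_left)

lemma trace_add: "trace (M + N) = trace M + trace (N::complex^3^3)"
  by (simp add: trace_def sum.distrib)
lemma trace_diff: "trace (M - N) = trace M - trace (N::complex^3^3)"
  by (simp add: trace_def sum_subtractf)

lemma rep_A: "Rep_sl3 Aelt = mu 1 2" unfolding Aelt_def by (rule Abs_sl3_inverse) (simp add: trace_mu)
lemma rep_B: "Rep_sl3 Belt = mu 2 3" unfolding Belt_def by (rule Abs_sl3_inverse) (simp add: trace_mu)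
lemma rep_E: "Rep_sl3 Eelt = mu 1 3" unfolding Eelt_def by (rule Abs_sl3_inverse) (simp add: trace_mu)
lemma rep_H: "Rep_sl3 HP = mH" unfolding HP_def mH_def
  by (rule Abs_sl3_inverse) (simp add: trace_mu trace_msc trace_add trace_diff)
lemma rep_K: "Rep_sl3 Hperp = mK" unfolding Hperp_def mK_def
  by (rule Abs_sl3_inverse) (simp add: trace_mu trace_msc trace_add trace_diff)

lemma br_eq: "Rep_sl3 x ** Rep_sl3 y - Rep_sl3 y ** Rep_sl3 x = Rep_sl3 z \<Longrightarrow> sl_bracket x y = z"
  by (simp add: sl_bracket_def Rep_sl3_inverse)

lemma scale_rep: "Rep_sl3 (sl_scale c x) = msc c (Rep_sl3 x)"
  unfolding sl_scale_def by (rule Abs_sl3_inverse) (simp add: trace_msc Rep_sl3[simplified])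

lemmas mcalc = matrix_matrix_mult_def sum_3 mu_def msc_def mH_def mK_def

lemma br_HE: "sl_bracket HP Eelt = Eelt"
  by (rule br_eq) (rule mat_eqI3, auto simp: rep_H rep_E mcalc)
lemma br_HA: "sl_bracket HP Aelt = Aelt"
  by (rule br_eq) (rule mat_eqI3, auto simp: rep_H rep_A mcalc)
lemma br_HB: "sl_bracket HP Belt = sl_scale 0 Belt"
  by (rule br_eq) (rule mat_eqI3, auto simp: rep_H rep_B scale_rep mcalc)
lemma br_HK: "sl_bracket HP Hperp = sl_scale 0 Belt"
  by (rule br_eq) (rule mat_eqI3, auto simp: rep_H rep_K rep_B scale_rep mcalc)
lemma br_KA: "sl_bracket Hperp Aelt = Aelt"
  by (rule br_eq) (rule mat_eqI3, auto simp: rep_K rep_A mcalc)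
lemma br_KB: "sl_bracket Hperp Belt = sl_scale (-1) Belt"
  by (rule br_eq) (rule mat_eqI3, auto simp: rep_K rep_B scale_rep mcalc)
lemma br_KE: "sl_bracket Hperp Eelt = sl_scale 0 Belt"
  by (rule br_eq) (rule mat_eqI3, auto simp: rep_K rep_E rep_B scale_rep mcalc)
lemma br_AB: "sl_bracket Aelt Belt = Eelt"
  by (rule br_eq) (rule mat_eqI3, auto simp: rep_A rep_B rep_E mcalc)
lemma br_EA: "sl_bracket Eelt Aelt = sl_scale 0 Belt"
  by (rule br_eq) (rule mat_eqI3, auto simp: rep_A rep_E rep_B scale_rep mcalc)
lemma br_EB: "sl_bracket Eelt Belt = sl_scale 0 Belt"
  by (rule br_eq) (rule mat_eqI3, auto simp: rep_E rep_B scale_rep mcalc)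


lemma prod_low:
  fixes A B :: "'a::semiring_1 fps"
  assumes "\<forall>k<a. fps_nth A k = 0" "\<forall>k<b. fps_nth B k = 0" "n < a + b"
  shows "fps_nth (A * B) n = 0"
  unfolding fps_mult_nth
proof (rule sum.neutral, rule ballI)
  fix i assume "i \<in> {0..n}"
  show "fps_nth A i * fps_nth B (n - i) = 0"
  proof (cases "i < a")
    case True then show ?thesis using assms(1) by simp
  next
    case False then have "n - i < b" using assms(3) \<open>i \<in> {0..n}\<close> by auto
    then show ?thesis using assms(2) by simp
  qed
qed

lemma pow_low:
  fixes Y :: "'a::semiring_1 fps"
  assumes "fps_nth Y 0 = 0"
  shows "\<forall>k<m. fps_nth (Y ^ m) k = 0"
proof (induct m)
  case 0 then show ?case by simp
next
  case (Suc m)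
  have "\<forall>k<1. fps_nth Y k = 0" using assms by simp
  with Suc show ?case by (auto intro!: prod_low[of 1 Y m "Y^m"])
qed

lemma pow_low': "fps_nth (Y::'a::semiring_1 fps) 0 = 0 \<Longrightarrow> k < m \<Longrightarrow> fps_nth (Y ^ m) k = 0"
  using pow_low by blast

lemma mult_prefix_left:
  fixes A B C :: "'a::semiring_1 fps"
  assumes "\<forall>k\<le>n. fps_nth A k = fps_nth B k"
  shows "fps_nth (A * C) n = fps_nth (B * C) n"
  unfolding fps_mult_nth by (rule sum.cong) (use assms in auto)

lemma mult_prefix_right:
  fixes A B C :: "'a::semiring_1 fps"
  assumes "\<forall>k\<le>n. fps_nth A k = fps_nth B k"
  shows "fps_nth (C * A) n = fps_nth (C * B) n"
  unfolding fps_mult_nth by (rule sum.cong) (use assms in auto)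

lemma cs_nth: "fps_nth (cs c * Z) n = qs c * fps_nth Z n"
  by (simp add: cs_def)

lemma cs_mult: "cs (a * b) = cs a * cs b"
  by (simp add: cs_def qs_mult)

lemma cs_1[simp]: "cs 1 = 1" by (simp add: cs_def)
lemma cs_0[simp]: "cs 0 = 0" by (simp add: cs_def)

lemma qs_of_nat: "qs (of_nat k) = of_nat k"
  by (induct k) (simp_all add: qs_add)

lemma cs_of_nat: "cs (of_nat k) = of_nat k"
  by (simp add: cs_def qs_of_nat fps_of_nat)

lemma qs_sum: "qs (\<Sum>i\<in>I. f i) = (\<Sum>i\<in>I. qs (f i))"
  by (induct I rule: infinite_finite_induct) (simp_all add: qs_add)

lemma cs_swap: "cs a * A * (cs b * B) = cs (a * b) * (A * B)"
proof -
  have "A * (cs b * B) = cs b * (A * B)"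
    by (simp only: mult.assoc[symmetric] cs_central[of b A])
  then show ?thesis by (simp add: cs_mult mult.assoc)
qed

definition Tr :: "(nat \<Rightarrow> complex) \<Rightarrow> uq fps \<Rightarrow> nat \<Rightarrow> uq fps" where
  "Tr a Y N = (\<Sum>m\<le>N. cs (a m) * Y ^ m)"

lemma Tr_nth: "fps_nth (Tr a Y N) n = (\<Sum>m\<le>N. qs (a m) * fps_nth (Y ^ m) n)"
  by (simp add: Tr_def fps_sum_nth cs_nth)

lemma qsub_Tr:
  assumes "fps_nth Y 0 = 0" "n \<le> N"
  shows "fps_nth (qsub a Y) n = fps_nth (Tr a Y N) n"
proof -
  have "\<forall>i\<in>{..N} - {..n}. qs (a i) * fps_nth (Y^i) n = 0" using pow_low'[OF assms(1)] by auto
  then show ?thesis unfolding qsub_nth Tr_nth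
    by (intro sum.mono_neutral_left) (use assms in auto)
qed

lemma qsub_Tr_all:
  assumes "fps_nth Y 0 = 0" "n \<le> N"
  shows "\<forall>k\<le>n. fps_nth (qsub a Y) k = fps_nth (Tr a Y N) k"
proof (intro allI impI)
  fix k assume "k \<le> n"
  then show "fps_nth (qsub a Y) k = fps_nth (Tr a Y N) k"
    by (intro qsub_Tr[OF assms(1)]) (use assms(2) in linarith)
qed

lemma qsub_Tr_all':
  assumes "fps_nth Y 0 = 0" "n \<le> N"
  shows "\<forall>k\<le>n. fps_nth (Tr a Y N) k = fps_nth (qsub a Y) k"
  using qsub_Tr_all[OF assms] by auto

lemma qsub_nth0: "fps_nth (qsub a Y) 0 = qs (a 0)"
  by (simp add: qsub_nth)

lemma pow_intertwine:
  fixes g Y Y' :: "'a::ring_1"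
  assumes "g * Y = Y' * g"
  shows "g * Y ^ m = Y' ^ m * g"
proof (induct m)
  case 0 then show ?case by simp
next
  case (Suc m)
  have "g * Y ^ Suc m = (g * Y ^ m) * Y" by (simp only: power_Suc2 mult.assoc)
  also have "\<dots> = Y' ^ m * (g * Y)" by (simp only: Suc mult.assoc)
  also have "\<dots> = Y' ^ Suc m * g" by (simp only: assms power_Suc2 mult.assoc)
  finally show ?case .
qed

lemma Tr_intertwine:
  assumes "g * Y = Y' * g"
  shows "g * Tr a Y N = Tr a Y' N * g"
  unfolding Tr_def sum_distrib_left sum_distrib_right
proof (rule sum.cong[OF refl])
  fix m
  have "g * (cs (a m) * Y ^ m) = cs (a m) * (g * Y ^ m)"
    by (simp only: mult.assoc[symmetric] cs_central[of "a m" g])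
  also have "\<dots> = cs (a m) * Y' ^ m * g"
    by (simp add: pow_intertwine[OF assms] mult.assoc)
  finally show "g * (cs (a m) * Y ^ m) = cs (a m) * Y' ^ m * g" .
qed

lemma qsub_intertwine:
  assumes "g * Y = Y' * g" "fps_nth Y 0 = 0" "fps_nth Y' 0 = 0"
  shows "g * qsub a Y = qsub a Y' * g"
proof (rule fps_ext)
  fix n
  have "fps_nth (g * qsub a Y) n = fps_nth (g * Tr a Y n) n"
    by (rule mult_prefix_right) (rule qsub_Tr_all[OF assms(2) order.refl])
  also have "\<dots> = fps_nth (Tr a Y' n * g) n" using Tr_intertwine[OF assms(1)] by simp
  also have "\<dots> = fps_nth (qsub a Y' * g) n"
    by (rule mult_prefix_left) (rule qsub_Tr_all'[OF assms(3) order.refl])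
  finally show "fps_nth (g * qsub a Y) n = fps_nth (qsub a Y' * g) n" .
qed

lemma qsub_commute:
  assumes "g * Y = Y * g" "fps_nth Y 0 = 0"
  shows "g * qsub a Y = qsub a Y * g"
  using qsub_intertwine[OF assms(1) assms(2) assms(2)] .

lemma qsub_prod_nth:
  assumes X0: "fps_nth X 0 = 0" and Y0: "fps_nth Y 0 = 0"
  shows "fps_nth (qsub a X * qsub b Y) n =
    (\<Sum>(i,j)\<in>{(i,j). i + j \<le> n}. qs (a i * b j) * fps_nth (X ^ i * Y ^ j) n)"
proof -
  have TT: "Tr a X n * Tr b Y n = (\<Sum>i\<le>n. \<Sum>j\<le>n. cs (a i * b j) * (X ^ i * Y ^ j))"
    by (simp only: Tr_def sum_product cs_swap)
  have "fps_nth (qsub a X * qsub b Y) n = fps_nth (Tr a X n * qsub b Y) n"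
    by (rule mult_prefix_left) (rule qsub_Tr_all[OF X0 order.refl])
  also have "\<dots> = fps_nth (Tr a X n * Tr b Y n) n"
    by (rule mult_prefix_right) (rule qsub_Tr_all[OF Y0 order.refl])
  also have "\<dots> = (\<Sum>i\<le>n. \<Sum>j\<le>n. qs (a i * b j) * fps_nth (X ^ i * Y ^ j) n)"
    by (simp add: TT fps_sum_nth cs_nth)
  also have "\<dots> = (\<Sum>(i,j)\<in>{..n} \<times> {..n}. qs (a i * b j) * fps_nth (X ^ i * Y ^ j) n)"
    by (rule sum.cartesian_product)
  also have "\<dots> = (\<Sum>(i,j)\<in>{(i,j). i + j \<le> n}. qs (a i * b j) * fps_nth (X ^ i * Y ^ j) n)"
  proof (rule sum.mono_neutral_right)
    show "finite ({..n} \<times> {..n})" by simp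
    show "{(i, j). i + j \<le> n} \<subseteq> {..n} \<times> {..n}" by auto
    show "\<forall>x\<in>{..n} \<times> {..n} - {(i, j). i + j \<le> n}. (case x of (i, j) \<Rightarrow> qs (a i * b j) * fps_nth (X ^ i * Y ^ j) n) = 0"
    proof -
      have z: "fps_nth (X ^ i * Y ^ j) n = 0" if "\<not> i + j \<le> n" for i j
        by (intro prod_low[of i _ j]) (use that pow_low[OF X0] pow_low[OF Y0] in auto)
      show ?thesis
      proof (intro ballI)
        fix x assume "x \<in> {..n} \<times> {..n} - {(i, j). i + j \<le> n}"
        then obtain i j where "x = (i, j)" "\<not> i + j \<le> n" by auto
        then show "(case x of (i, j) \<Rightarrow> qs (a i * b j) * fps_nth (X ^ i * Y ^ j) n) = 0"
          using z by simp
      qed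
    qed
  qed
  finally show ?thesis .
qed

section \<open>Exponential of a sum of commuting elements\<close>

lemma pow_commute:
  fixes x y :: "'a::ring_1"
  assumes "x * y = y * x"
  shows "y * x ^ n = x ^ n * y"
  using pow_intertwine[of y x x n] assms by simp

lemma binomial_commute:
  fixes x y :: "'a::ring_1"
  assumes xy: "x * y = y * x"
  shows "(x + y) ^ n = (\<Sum>k\<le>n. of_nat (n choose k) * x ^ k * y ^ (n - k))"
proof (induct n)
  case 0 then show ?case by simp
next
  case (Suc n)
  have decomp: "{0..n+1} = {0} \<union> {n + 1} \<union> {1..n}" and decomp2: "{0..n} = {0} \<union> {1..n}"
    by auto
  have t1: "x * (of_nat c * x ^ k * y ^ m) = of_nat c * x ^ (k + 1) * y ^ m" for c k m
  proof -
    have "x * (of_nat c * x ^ k * y ^ m) = (x * of_nat c) * x ^ k * y ^ m" by (simp only: mult.assoc)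
    also have "\<dots> = of_nat c * (x * x ^ k) * y ^ m" by (simp only: mult_of_nat_commute mult.assoc)
    finally show ?thesis by simp
  qed
  have t2: "y * (of_nat c * x ^ k * y ^ m) = of_nat c * x ^ k * y ^ (m + 1)" for c k m
  proof -
    have yc: "y * of_nat c = of_nat c * y" by (rule mult_of_nat_commute[symmetric])
    have "y * (of_nat c * x ^ k * y ^ m) = (y * of_nat c) * x ^ k * y ^ m"
      by (simp only: mult.assoc)
    also have "\<dots> = of_nat c * (y * x ^ k) * y ^ m"
      by (simp only: yc mult.assoc)
    also have "\<dots> = of_nat c * x ^ k * (y * y ^ m)"
      by (simp only: pow_commute[OF xy] mult.assoc)
    also have "\<dots> = of_nat c * x ^ k * y ^ (m + 1)"
      by simp
    finally show ?thesis .
  qed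
  have "(x + y)^(n+1) = (x + y) * (\<Sum>k\<le>n. of_nat (n choose k) * x^k * y^(n - k))"
    using Suc.hyps by simp
  also have "\<dots> = x * (\<Sum>k\<le>n. of_nat (n choose k) * x^k * y^(n-k)) +
      y * (\<Sum>k\<le>n. of_nat (n choose k) * x^k * y^(n-k))"
    by (rule distrib_right)
  also have "\<dots> = (\<Sum>k\<le>n. of_nat (n choose k) * x^(k+1) * y^(n-k)) +
      (\<Sum>k\<le>n. of_nat (n choose k) * x^k * y^(n - k + 1))"
    by (simp only: sum_distrib_left t1 t2)
  also have "\<dots> = (\<Sum>k\<le>n. of_nat (n choose k) * x^k * y^(n + 1 - k)) +
      (\<Sum>k=1..n+1. of_nat (n choose (k - 1)) * x^k * y^(n + 1 - k))"
    by (simp add: atMost_atLeast0 sum.shift_bounds_cl_Suc_ivl Suc_diff_le del: sum.cl_ivl_Suc)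
  also have "\<dots> = y^(n + 1) +
      (\<Sum>k=1..n. of_nat (n choose k) * x^k * y^(n + 1 - k)) + (x^(n + 1) +
      (\<Sum>k=1..n. of_nat (n choose (k - 1)) * x^k * y^(n + 1 - k)))"
      using sum.nat_ivl_Suc' [of 1 n "\<lambda>k. of_nat (n choose (k-1)) * x ^ k * y ^ (n + 1 - k)"]
    by (simp add: sum.atLeast_Suc_atMost atMost_atLeast0)
  also have "\<dots> = x^(n + 1) + y^(n + 1) +
      (\<Sum>k=1..n. of_nat (n + 1 choose k) * x^k * y^(n + 1 - k))"
    by (auto simp add: algebra_simps sum.distrib [symmetric] choose_reduce_nat intro!: sum.cong)
  also have "\<dots> = (\<Sum>k\<le>n+1. of_nat (n + 1 choose k) * x^k * y^(n + 1 - k))"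
    using decomp by (simp add: atMost_atLeast0 algebra_simps)
  finally show ?case
    by simp
qed

lemma ec_binom: "i \<le> m \<Longrightarrow> ec m * of_nat (m choose i) = ec i * ec (m - i)"
  by (simp add: ec_def binomial_fact)

lemma qexp_add:
  assumes xy: "X * Y = Y * X" and X0: "fps_nth X 0 = 0" and Y0: "fps_nth Y 0 = 0"
  shows "qexp (X + Y) = qexp X * qexp Y"
proof (rule fps_ext)
  fix n
  let ?g = "\<lambda>i j. qs (ec i * ec j) * fps_nth (X ^ i * Y ^ j) n"
  have "fps_nth (qexp (X + Y)) n = (\<Sum>m\<le>n. qs (ec m) * fps_nth ((X + Y) ^ m) n)"
    by (rule qsub_nth)
  also have "\<dots> = (\<Sum>m\<le>n. \<Sum>i\<le>m. ?g i (m - i))"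
  proof (rule sum.cong[OF refl])
    fix m assume "m \<in> {..n}"
    have "qs (ec m) * fps_nth ((X + Y) ^ m) n =
        (\<Sum>i\<le>m. qs (ec m) * (qs (of_nat (m choose i)) * fps_nth (X ^ i * Y ^ (m - i)) n))"
      unfolding binomial_commute[OF xy] fps_sum_nth sum_distrib_left
      by (simp add: mult.assoc fps_of_nat[symmetric] qs_of_nat)
    also have "\<dots> = (\<Sum>i\<le>m. ?g i (m - i))"
      by (rule sum.cong[OF refl]) (simp add: mult.assoc[symmetric] qs_mult[symmetric] ec_binom)
    finally show "qs (ec m) * fps_nth ((X + Y) ^ m) n = (\<Sum>i\<le>m. ?g i (m - i))" .
  qed
  also have "\<dots> = (\<Sum>(i,j)\<in>{(i,j). i + j \<le> n}. ?g i j)"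
    by (rule sum.triangle_reindex_eq[symmetric])
  also have "\<dots> = fps_nth (qexp X * qexp Y) n"
    by (rule qsub_prod_nth[OF X0 Y0, symmetric])
  finally show "fps_nth (qexp (X + Y)) n = fps_nth (qexp X * qexp Y) n" .
qed

lemma qexp_zero: "qexp 0 = 1"
proof (rule fps_ext)
  fix n
  have "(\<Sum>m\<le>n. qs (ec m) * fps_nth (0 ^ m) n) = (\<Sum>m\<in>{0}. qs (ec m) * fps_nth (0 ^ m) n)"
    by (rule sum.mono_neutral_right) (auto simp: power_0_left)
  then show "fps_nth (qexp 0) n = fps_nth 1 n" by (simp add: qsub_nth ec_def)
qed

lemma qexp_nth0: "fps_nth (qexp X) 0 = 1"
  by (simp add: qsub_nth0 ec_def)

lemma qexp_inverse:
  assumes "fps_nth X 0 = 0"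
  shows "qexp X * qexp (- X) = 1" "qexp (- X) * qexp X = 1"
proof -
  have "qexp (X + - X) = qexp X * qexp (- X)" by (rule qexp_add) (use assms in auto)
  then show "qexp X * qexp (- X) = 1" by (simp add: qexp_zero)
  have "qexp (- X + X) = qexp (- X) * qexp X" by (rule qexp_add) (use assms in auto)
  then show "qexp (- X) * qexp X = 1" by (simp add: qexp_zero)
qed


abbreviation Phi :: "complex fps \<Rightarrow> uq fps \<Rightarrow> uq fps" where "Phi f Y \<equiv> qsub (fps_nth f) Y"

lemma Phi_mult:
  assumes Y0: "fps_nth Y 0 = 0"
  shows "Phi (f * g) Y = Phi f Y * Phi g Y"
proof (rule fps_ext)
  fix n
  let ?g = "\<lambda>i j. qs (fps_nth f i * fps_nth g j) * fps_nth (Y ^ i * Y ^ j) n"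
  have "fps_nth (Phi (f * g) Y) n = (\<Sum>m\<le>n. qs (fps_nth (f * g) m) * fps_nth (Y ^ m) n)"
    by (rule qsub_nth)
  also have "\<dots> = (\<Sum>m\<le>n. \<Sum>i\<le>m. ?g i (m - i))"
  proof (rule sum.cong[OF refl])
    fix m assume "m \<in> {..n}"
    have "qs (fps_nth (f * g) m) * fps_nth (Y ^ m) n = (\<Sum>i\<le>m. qs (fps_nth f i * fps_nth g (m - i)) * fps_nth (Y ^ m) n)"
      by (simp add: fps_mult_nth qs_sum sum_distrib_right atLeast0AtMost)
    also have "\<dots> = (\<Sum>i\<le>m. ?g i (m - i))"
      by (rule sum.cong[OF refl]) (simp add: power_add[symmetric])
    finally show "qs (fps_nth (f * g) m) * fps_nth (Y ^ m) n = (\<Sum>i\<le>m. ?g i (m - i))" .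
  qed
  also have "\<dots> = (\<Sum>(i,j)\<in>{(i,j). i + j \<le> n}. ?g i j)"
    by (rule sum.triangle_reindex_eq[symmetric])
  also have "\<dots> = fps_nth (Phi f Y * Phi g Y) n"
    by (rule qsub_prod_nth[OF Y0 Y0, symmetric])
  finally show "fps_nth (Phi (f * g) Y) n = fps_nth (Phi f Y * Phi g Y) n" .
qed

lemma Phi_one: "Phi 1 Y = 1"
proof (rule fps_ext)
  fix n
  have "(\<Sum>m\<le>n. qs (fps_nth (1::complex fps) m) * fps_nth (Y ^ m) n) = (\<Sum>m\<in>{0}. qs (fps_nth (1::complex fps) m) * fps_nth (Y ^ m) n)"
    by (rule sum.mono_neutral_right) auto
  then show "fps_nth (Phi 1 Y) n = fps_nth 1 n" by (simp add: qsub_nth)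
qed

lemma Phi_X:
  assumes Y0: "fps_nth Y 0 = 0"
  shows "Phi fps_X Y = Y"
proof (rule fps_ext)
  fix n
  show "fps_nth (Phi fps_X Y) n = fps_nth Y n"
  proof (cases n)
    case 0 then show ?thesis using Y0 by (simp add: qsub_nth)
  next
    case (Suc k)
    have "(\<Sum>m\<le>n. qs (fps_nth (fps_X::complex fps) m) * fps_nth (Y ^ m) n) = (\<Sum>m\<in>{1}. qs (fps_nth (fps_X::complex fps) m) * fps_nth (Y ^ m) n)"
      by (rule sum.mono_neutral_right) (auto simp: Suc fps_X_nth)
    then show ?thesis by (simp add: qsub_nth fps_X_nth)
  qed
qed

lemma Phi_add: "Phi (f + g) Y = Phi f Y + Phi g Y"
  by (rule fps_ext) (simp add: qsub_nth qs_add distrib_right sum.distrib)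

lemma Phi_diff: "Phi (f - g) Y = Phi f Y - Phi g Y"
  by (rule fps_ext) (simp add: qsub_nth qs_diff left_diff_distrib sum_subtractf)

lemma Phi_power:
  assumes Y0: "fps_nth Y 0 = 0"
  shows "Phi (f ^ i) Y = Phi f Y ^ i"
  by (induct i) (simp_all only: power_0 power_Suc Phi_one Phi_mult[OF Y0])

lemma Phi_compose:
  assumes Y0: "fps_nth Y 0 = 0" and g0: "fps_nth g 0 = 0"
  shows "Phi (f oo g) Y = Phi f (Phi g Y)"
proof (rule fps_ext)
  fix n
  have Z0: "fps_nth (Phi g Y) 0 = 0" by (simp add: qsub_nth0 g0)
  have low: "fps_nth (g ^ i) m = 0" if "m < i" for i m
    using pow_low'[OF g0 that] .
  have "fps_nth (Phi (f oo g) Y) n = (\<Sum>m\<le>n. qs (fps_nth (f oo g) m) * fps_nth (Y ^ m) n)"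
    by (rule qsub_nth)
  also have "\<dots> = (\<Sum>m\<le>n. \<Sum>i\<le>n. qs (fps_nth f i) * (qs (fps_nth (g ^ i) m) * fps_nth (Y ^ m) n))"
  proof (rule sum.cong[OF refl])
    fix m assume m: "m \<in> {..n}"
    have "qs (fps_nth (f oo g) m) * fps_nth (Y ^ m) n = (\<Sum>i\<le>m. qs (fps_nth f i) * (qs (fps_nth (g ^ i) m) * fps_nth (Y ^ m) n))"
      by (simp add: fps_compose_nth qs_sum qs_mult sum_distrib_right atLeast0AtMost mult.assoc)
    also have "\<dots> = (\<Sum>i\<le>n. qs (fps_nth f i) * (qs (fps_nth (g ^ i) m) * fps_nth (Y ^ m) n))"
      by (rule sum.mono_neutral_left) (use m low in auto)
    finally show "qs (fps_nth (f oo g) m) * fps_nth (Y ^ m) n = (\<Sum>i\<le>n. qs (fps_nth f i) * (qs (fps_nth (g ^ i) m) * fps_nth (Y ^ m) n))" .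
  qed
  also have "\<dots> = (\<Sum>i\<le>n. qs (fps_nth f i) * (\<Sum>m\<le>n. qs (fps_nth (g ^ i) m) * fps_nth (Y ^ m) n))"
    by (subst sum.swap) (simp only: sum_distrib_left)
  also have "\<dots> = (\<Sum>i\<le>n. qs (fps_nth f i) * fps_nth (Phi g Y ^ i) n)"
    by (simp add: Phi_power[OF Y0, symmetric] qsub_nth)
  also have "\<dots> = fps_nth (Phi f (Phi g Y)) n"
    by (simp add: qsub_nth)
  finally show "fps_nth (Phi (f oo g) Y) n = fps_nth (Phi f (Phi g Y)) n" .
qed

lemma ec_eq: "ec = fps_nth (fps_exp (1::complex))"
  by (rule ext) (simp add: ec_def)

lemma lnc_eq: "lnc = fps_nth (fps_ln (1::complex))"
proof (rule ext)
  fix m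
  show "lnc m = fps_nth (fps_ln 1) m"
  proof (cases m)
    case 0 then show ?thesis by (simp add: lnc_def)
  next
    case (Suc k)
    have "(-1::complex) ^ (Suc k + 1) = (-1) ^ k" by simp
    then show ?thesis by (simp add: lnc_def fps_ln_nth Suc)
  qed
qed

lemma E1_0: "fps_nth (fps_exp (1::complex) - 1) 0 = 0" by simp
lemma E1_1: "fps_nth (fps_exp (1::complex) - 1) 1 \<noteq> 0" by simp

lemma exp_oo_ln: "fps_exp (1::complex) oo fps_ln 1 = 1 + fps_X"
proof -
  have "(fps_exp (1::complex) - 1) oo fps_ln 1 = fps_X"
    unfolding fps_ln_fps_exp_inv[of 1, simplified] by (rule fps_inv_right[OF E1_0 E1_1])
  then have "(fps_exp (1::complex) oo fps_ln 1) - 1 = fps_X"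
    by (simp add: fps_compose_sub_distrib)
  then show ?thesis by (simp add: algebra_simps)
qed

lemma ln_oo_exp: "fps_ln (1::complex) oo (fps_exp 1 - 1) = fps_X"
  unfolding fps_ln_fps_exp_inv[of 1, simplified] by (rule fps_inv[OF E1_0 E1_1])

lemma qln_nth0: "fps_nth (qln Y) 0 = 0" by (simp add: qsub_nth0 lnc_def)

lemma qexp_qln:
  assumes Y0: "fps_nth Y 0 = 0"
  shows "qexp (qln Y) = 1 + Y"
proof -
  have "qexp (qln Y) = Phi (fps_exp 1) (Phi (fps_ln 1) Y)" by (simp add: ec_eq lnc_eq)
  also have "\<dots> = Phi (fps_exp 1 oo fps_ln 1) Y" by (rule Phi_compose[symmetric]) (simp_all add: Y0)
  also have "\<dots> = 1 + Y" by (simp add: exp_oo_ln Phi_add Phi_one Phi_X[OF Y0])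
  finally show ?thesis .
qed

lemma qln_qexp:
  assumes W0: "fps_nth W 0 = 0"
  shows "qln (qexp W - 1) = W"
proof -
  have "qexp W - 1 = Phi (fps_exp 1 - 1) W" by (simp add: ec_eq Phi_diff Phi_one)
  then have "qln (qexp W - 1) = Phi (fps_ln 1) (Phi (fps_exp 1 - 1) W)" by (simp add: lnc_eq)
  also have "\<dots> = Phi (fps_ln 1 oo (fps_exp 1 - 1)) W" by (rule Phi_compose[symmetric]) (simp_all add: W0)
  also have "\<dots> = W" by (simp add: ln_oo_exp Phi_X[OF W0])
  finally show ?thesis .
qed

lemma pow_shift:
  fixes X Y C :: "'a::ring_1"
  assumes xy: "X * Y = Y * X + C" and xc: "X * C = C * X"
  shows "X ^ Suc m * Y = Y * X ^ Suc m + of_nat (Suc m) * C * X ^ m"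
proof (induct m)
  case 0 then show ?case using xy by simp
next
  case (Suc m)
  have "X ^ Suc (Suc m) * Y = X * (X ^ Suc m * Y)" by (simp only: power_Suc mult.assoc)
  also have "\<dots> = X * Y * X ^ Suc m + X * (of_nat (Suc m) * C * X ^ m)"
    by (simp only: Suc distrib_left mult.assoc)
  also have "X * (of_nat (Suc m) * C * X ^ m) = of_nat (Suc m) * C * X ^ Suc m"
  proof -
    have "X * (of_nat (Suc m) * C * X ^ m) = (X * of_nat (Suc m)) * C * X ^ m" by (simp only: mult.assoc)
    also have "\<dots> = of_nat (Suc m) * (X * C) * X ^ m" by (simp only: mult_of_nat_commute mult.assoc)
    also have "\<dots> = of_nat (Suc m) * C * X ^ Suc m" by (simp only: xc mult.assoc power_Suc)
    finally show ?thesis .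
  qed
  also have "X * Y * X ^ Suc m = Y * X ^ Suc (Suc m) + C * X ^ Suc m"
    by (simp only: xy distrib_right mult.assoc power_Suc)
  finally show ?case by (simp add: algebra_simps)
qed

lemma ec_Suc: "ec (Suc m) * of_nat (Suc m) = ec m"
  unfolding ec_def fact_Suc of_nat_mult by (simp add: field_simps del: of_nat_Suc)

lemma Tr_shift:
  assumes xy: "X * Y = Y * X + C" and xc: "X * C = C * X"
  shows "Tr ec X (Suc n) * Y = Y * Tr ec X (Suc n) + C * Tr ec X n"
proof -
  have T: "Tr ec X (Suc n) = 1 + (\<Sum>m\<le>n. cs (ec (Suc m)) * X ^ Suc m)"
  proof -
    have "ec 0 = 1" by (simp add: ec_def)
    then show ?thesis by (simp only: Tr_def sum.atMost_Suc_shift cs_1 power_0 mult_1)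
  qed
  have a: "cs (ec (Suc m)) * X ^ Suc m * Y = Y * (cs (ec (Suc m)) * X ^ Suc m) + C * (cs (ec m) * X ^ m)" for m
  proof -
    have "cs (ec (Suc m)) * X ^ Suc m * Y = cs (ec (Suc m)) * (X ^ Suc m * Y)" by (simp only: mult.assoc)
    also have "\<dots> = cs (ec (Suc m)) * (Y * X ^ Suc m) + cs (ec (Suc m)) * (of_nat (Suc m) * C * X ^ m)"
      by (simp only: pow_shift[OF xy xc] distrib_left)
    also have "cs (ec (Suc m)) * (Y * X ^ Suc m) = Y * (cs (ec (Suc m)) * X ^ Suc m)"
      by (simp only: mult.assoc[symmetric] cs_central[of _ Y])
    also have "cs (ec (Suc m)) * (of_nat (Suc m) * C * X ^ m) = C * (cs (ec m) * X ^ m)"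
    proof -
      have "cs (ec (Suc m)) * (of_nat (Suc m) * C * X ^ m) = cs (ec (Suc m) * of_nat (Suc m)) * C * X ^ m"
        by (simp only: cs_mult cs_of_nat[symmetric] mult.assoc)
      also have "\<dots> = C * (cs (ec m) * X ^ m)"
        by (simp only: ec_Suc cs_central[of _ C] mult.assoc)
      finally show ?thesis .
    qed
    finally show ?thesis .
  qed
  show ?thesis
    unfolding T distrib_right distrib_left sum_distrib_right sum_distrib_left a sum.distrib
    by (simp add: Tr_def sum_distrib_left)
qed

lemma qexp_shift:
  assumes xy: "X * Y = Y * X + C" and xc: "X * C = C * X" and X0: "fps_nth X 0 = 0"
  shows "qexp X * Y = (Y + C) * qexp X"
proof (rule fps_ext)
  fix n
  have "fps_nth (qexp X * Y) n = fps_nth (Tr ec X (Suc n) * Y) n"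
    by (rule mult_prefix_left) (rule qsub_Tr_all[OF X0], simp)
  also have "\<dots> = fps_nth (Y * Tr ec X (Suc n)) n + fps_nth (C * Tr ec X n) n"
    by (simp add: Tr_shift[OF xy xc])
  also have "fps_nth (Y * Tr ec X (Suc n)) n = fps_nth (Y * qexp X) n"
    by (rule mult_prefix_right) (rule qsub_Tr_all'[OF X0], simp)
  also have "fps_nth (C * Tr ec X n) n = fps_nth (C * qexp X) n"
    by (rule mult_prefix_right) (rule qsub_Tr_all'[OF X0], simp)
  finally show "fps_nth (qexp X * Y) n = fps_nth ((Y + C) * qexp X) n"
    by (simp add: distrib_right)
qed


definition cm :: "uq fps \<Rightarrow> uq fps \<Rightarrow> bool" where "cm a b \<longleftrightarrow> a * b = b * a"

lemma cmD: "cm a b \<Longrightarrow> a * b = b * a" by (simp add: cm_def)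
lemma cm_sym: "cm a b \<Longrightarrow> cm b a" by (simp add: cm_def)

lemma cm_refl: "cm a a" by (simp add: cm_def)
lemma cm_mult_l: assumes "cm a c" "cm b c" shows "cm (a * b) c"
proof -
  have "a * b * c = a * (c * b)" using assms(2) by (simp only: cm_def mult.assoc)
  also have "\<dots> = (a * c) * b" by (simp only: mult.assoc)
  also have "\<dots> = c * (a * b)" using assms(1) by (simp only: cm_def mult.assoc)
  finally show ?thesis by (simp only: cm_def)
qed
lemma cm_mult_r: assumes "cm a b" "cm a c" shows "cm a (b * c)"
proof -
  have "a * (b * c) = (b * a) * c" using assms(1) by (simp only: cm_def mult.assoc[symmetric])
  also have "\<dots> = b * (a * c)" by (simp only: mult.assoc)
  also have "\<dots> = (b * c) * a" using assms(2) by (simp only: cm_def mult.assoc)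
  finally show ?thesis by (simp only: cm_def)
qed
lemma cm_add_l: "cm a c \<Longrightarrow> cm b c \<Longrightarrow> cm (a + b) c"
  by (simp add: cm_def distrib_left distrib_right)
lemma cm_add_r: "cm a b \<Longrightarrow> cm a c \<Longrightarrow> cm a (b + c)"
  by (simp add: cm_def distrib_left distrib_right)
lemma cm_diff_l: "cm a c \<Longrightarrow> cm b c \<Longrightarrow> cm (a - b) c"
  by (simp add: cm_def left_diff_distrib right_diff_distrib)
lemma cm_diff_r: "cm a b \<Longrightarrow> cm a c \<Longrightarrow> cm a (b - c)"
  by (simp add: cm_def left_diff_distrib right_diff_distrib)
lemma cm_uminus_l: "cm a c \<Longrightarrow> cm (- a) c" by (simp add: cm_def)
lemma cm_uminus_r: "cm a c \<Longrightarrow> cm a (- c)" by (simp add: cm_def)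
lemma cm_one_l: "cm 1 a" by (simp add: cm_def)
lemma cm_one_r: "cm a 1" by (simp add: cm_def)
lemma cm_cs_l: "cm (cs c) a" by (simp add: cm_def cs_central)
lemma cm_cs_r: "cm a (cs c)" by (simp add: cm_def cs_central)
lemma cm_X_l: "cm fps_X a" by (simp add: cm_def fps_mult_fps_X_commute)
lemma cm_X_r: "cm a fps_X" by (simp add: cm_def fps_mult_fps_X_commute)
lemma cm_qsub_r: "cm g Y \<Longrightarrow> fps_nth Y 0 = 0 \<Longrightarrow> cm g (qsub a Y)"
  unfolding cm_def by (rule qsub_commute)
lemma cm_qsub_l: "cm Y g \<Longrightarrow> fps_nth Y 0 = 0 \<Longrightarrow> cm (qsub a Y) g"
  using cm_qsub_r[of g Y a] by (simp add: cm_def)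

lemmas cm_intros = cm_refl cm_mult_l cm_mult_r cm_add_l cm_add_r cm_diff_l cm_diff_r
  cm_uminus_l cm_uminus_r cm_one_l cm_one_r cm_cs_l cm_cs_r cm_X_l cm_X_r cm_qsub_l cm_qsub_r

lemma nth0_mult: "fps_nth (a * b) 0 = fps_nth a 0 * fps_nth (b::uq fps) 0"
  by (simp add: fps_mult_nth)

lemma qln_z0: "fps_nth (qln Y) 0 = 0" by (rule qln_nth0)

definition gg :: "nat \<Rightarrow> sl3 \<Rightarrow> uq fps" where "gg k x = fps_const (lu k x)"

lemma gg_diff: assumes "k \<noteq> j" shows "cm (gg k x) (gg j y)"
  unfolding cm_def gg_def by (simp only: fps_const_mult lu_comm[OF assms])

lemma gg_lie: "gg k x * gg k y = gg k y * gg k x + gg k (sl_bracket x y)"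
  unfolding gg_def by (simp only: fps_const_mult fps_const_add lu_lie[of k x y])

lemma gg_scale: "gg k (sl_scale c x) = cs c * gg k x"
  by (simp add: gg_def lu_scale cs_def)

lemma gg_zero: "gg k (sl_scale 0 x) = 0"
  by (simp add: gg_scale)

lemma cm_gg01: "cm (gg 0 x) (gg 1 y)" by (rule gg_diff) simp
lemma cm_gg10: "cm (gg 1 x) (gg 0 y)" by (rule gg_diff) simp
lemma cm_gg02: "cm (gg 0 x) (gg 2 y)" by (rule gg_diff) simp
lemma cm_gg20: "cm (gg 2 x) (gg 0 y)" by (rule gg_diff) simp
lemma cm_gg12: "cm (gg 1 x) (gg 2 y)" by (rule gg_diff) simp
lemma cm_gg21: "cm (gg 2 x) (gg 1 y)" by (rule gg_diff) simp

lemma cm_by_zero: "sl_bracket x y = sl_scale 0 Belt \<Longrightarrow> cm (gg k x) (gg k y)"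
  unfolding cm_def using gg_lie[of k x y] by (simp add: gg_zero)

lemma cm_HB: "cm (gg k HP) (gg k Belt)" by (rule cm_by_zero) (rule br_HB)
lemma cm_HK: "cm (gg k HP) (gg k Hperp)" by (rule cm_by_zero) (rule br_HK)
lemma cm_KE: "cm (gg k Hperp) (gg k Eelt)" by (rule cm_by_zero) (rule br_KE)
lemma cm_EA: "cm (gg k Eelt) (gg k Aelt)" by (rule cm_by_zero) (rule br_EA)
lemma cm_EB: "cm (gg k Eelt) (gg k Belt)" by (rule cm_by_zero) (rule br_EB)
lemma cm_BH: "cm (gg k Belt) (gg k HP)" by (rule cm_sym) (rule cm_HB)
lemma cm_KH: "cm (gg k Hperp) (gg k HP)" by (rule cm_sym) (rule cm_HK)
lemma cm_EK: "cm (gg k Eelt) (gg k Hperp)" by (rule cm_sym) (rule cm_KE)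
lemma cm_AE: "cm (gg k Aelt) (gg k Eelt)" by (rule cm_sym) (rule cm_EA)
lemma cm_BE: "cm (gg k Belt) (gg k Eelt)" by (rule cm_sym) (rule cm_EB)

lemmas cm_base = cm_gg01 cm_gg10 cm_gg02 cm_gg20 cm_gg12 cm_gg21
  cm_HB cm_HK cm_KE cm_EA cm_EB cm_BH cm_KH cm_EK cm_AE cm_BE

lemma rel_HE: "gg k HP * gg k Eelt = gg k Eelt * gg k HP + gg k Eelt"
  using gg_lie[of k HP Eelt] by (simp add: br_HE)
lemma rel_HA: "gg k HP * gg k Aelt = gg k Aelt * gg k HP + gg k Aelt"
  using gg_lie[of k HP Aelt] by (simp add: br_HA)
lemma rel_KA: "gg k Hperp * gg k Aelt = gg k Aelt * gg k Hperp + gg k Aelt"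
  using gg_lie[of k Hperp Aelt] by (simp add: br_KA)
lemma fc_m1: "fps_const (-1::uq) * X = - X" by (rule fps_ext) simp

lemma rel_KB: "gg k Hperp * gg k Belt = gg k Belt * gg k Hperp - gg k Belt"
  using gg_lie[of k Hperp Belt] by (simp add: br_KB gg_scale cs_def qs_uminus fc_m1)
lemma rel_AB: "gg k Aelt * gg k Belt = gg k Belt * gg k Aelt + gg k Eelt"
  using gg_lie[of k Aelt Belt] by (simp add: br_AB)

lemma qexp_add_cm: "cm X Y \<Longrightarrow> fps_nth X 0 = 0 \<Longrightarrow> fps_nth Y 0 = 0 \<Longrightarrow> qexp (X + Y) = qexp X * qexp Y"
  by (rule qexp_add) (simp_all add: cm_def)

lemma qexp_intertwine: "g * Y = Y' * g \<Longrightarrow> fps_nth Y 0 = 0 \<Longrightarrow> fps_nth Y' 0 = 0 \<Longrightarrow> g * qexp Y = qexp Y' * g"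
  by (rule qsub_intertwine)

lemma qln_intertwine: "g * Y = Y' * g \<Longrightarrow> fps_nth Y 0 = 0 \<Longrightarrow> fps_nth Y' 0 = 0 \<Longrightarrow> g * qln Y = qln Y' * g"
  by (rule qsub_intertwine)

lemma qln_mult_comm:
  assumes c: "cm y1 y2" and z1: "fps_nth y1 0 = 0" and z2: "fps_nth y2 0 = 0"
  shows "qln (y1 + y2 + y1 * y2) = qln y1 + qln y2"
proof -
  have c1: "cm y1 (qln y2)" by (rule cm_qsub_r[OF c z2])
  have c2: "cm (qln y1) (qln y2)" by (rule cm_qsub_l[OF c1 z1])
  have "qexp (qln y1 + qln y2) = qexp (qln y1) * qexp (qln y2)"
    by (rule qexp_add_cm[OF c2]) (simp_all add: qln_nth0)
  also have "\<dots> = (1 + y1) * (1 + y2)" by (simp add: qexp_qln z1 z2)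
  finally have "y1 + y2 + y1 * y2 = qexp (qln y1 + qln y2) - 1"
    by (simp add: algebra_simps)
  then show ?thesis by (simp add: qln_qexp qln_nth0)
qed

lemma conj_pass:
  assumes hy: "h * y = y * h + y" and c1: "cm h y2" and c2: "cm y y2" and z2: "fps_nth y2 0 = 0"
  shows "qexp (h * qln y2) * y = y * (1 + y2) * qexp (h * qln y2)"
proof -
  let ?s = "qln y2"
  have hs: "cm h ?s" by (rule cm_qsub_r[OF c1 z2])
  have ys: "cm y ?s" by (rule cm_qsub_r[OF c2 z2])
  have s0: "fps_nth ?s 0 = 0" by (rule qln_nth0)
  have hs0: "fps_nth (h * ?s) 0 = 0" by (simp add: nth0_mult s0)
  have "y * (h * ?s + ?s) = (h * ?s) * y"
  proof -
    have "(h * ?s) * y = h * (?s * y)" by (simp only: mult.assoc)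
    also have "\<dots> = (h * y) * ?s" using ys by (simp only: cm_def mult.assoc)
    also have "\<dots> = (y * h + y) * ?s" by (simp only: hy)
    also have "\<dots> = y * (h * ?s + ?s)" by (simp only: distrib_left distrib_right mult.assoc)
    finally show ?thesis by (rule sym)
  qed
  then have "y * qexp (h * ?s + ?s) = qexp (h * ?s) * y"
    by (rule qexp_intertwine) (simp_all add: hs0 s0)
  moreover have "qexp (h * ?s + ?s) = qexp (h * ?s) * (1 + y2)"
  proof -
    have "cm (h * ?s) ?s" by (intro cm_mult_l hs cm_refl)
    then have "qexp (h * ?s + ?s) = qexp (h * ?s) * qexp ?s" by (rule qexp_add_cm) (simp_all only: hs0 s0)
    then show ?thesis by (simp only: qexp_qln[OF z2])
  qed
  moreover have "qexp (h * ?s) * (1 + y2) = (1 + y2) * qexp (h * ?s)"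
  proof -
    have "cm (h * ?s) (1 + y2)" by (intro cm_add_r cm_one_r cm_mult_l c1 cm_sym[OF ys[THEN cm_sym, THEN cm_sym]] cm_qsub_l cm_refl z2)
    then have "cm (qexp (h * ?s)) (1 + y2)" by (intro cm_qsub_l) (simp_all add: hs0 nth0_mult s0)
    then show ?thesis by (simp add: cm_def)
  qed
  ultimately show ?thesis by (simp add: mult.assoc)
qed


lemma ctx_rule: "x * y = y * x + w \<Longrightarrow> x * (y * z) = y * (x * z) + w * (z::uq fps)"
  by (simp add: mult.assoc[symmetric] distrib_right)

lemma ctx_rule_m: "x * y = y * x - w \<Longrightarrow> x * (y * z) = y * (x * z) - w * (z::uq fps)"
  by (simp add: mult.assoc[symmetric] left_diff_distrib)

lemma ctx_rule0: "x * y = y * x \<Longrightarrow> x * (y * z) = y * (x * (z::uq fps))"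
  by (simp add: mult.assoc[symmetric])

lemma sw_leg: "i < j \<Longrightarrow> gg j x * gg i y = gg i y * gg j x"
  using gg_diff[of j i x y] by (simp add: cm_def)
lemma sw_leg_ctx: "i < j \<Longrightarrow> gg j x * (gg i y * z) = gg i y * (gg j x * z)"
  by (rule ctx_rule0) (rule sw_leg)

lemma nAE: "gg k Aelt * gg k Eelt = gg k Eelt * gg k Aelt" using cm_AE by (simp add: cm_def)
lemma nBE: "gg k Belt * gg k Eelt = gg k Eelt * gg k Belt" using cm_BE by (simp add: cm_def)
lemma nHB: "gg k HP * gg k Belt = gg k Belt * gg k HP" using cm_HB by (simp add: cm_def)
lemma nKE: "gg k Hperp * gg k Eelt = gg k Eelt * gg k Hperp" using cm_KE by (simp add: cm_def)
lemma nKH: "gg k Hperp * gg k HP = gg k HP * gg k Hperp" using cm_KH by (simp add: cm_def)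
lemma nBA: "gg k Belt * gg k Aelt = gg k Aelt * gg k Belt - gg k Eelt" using rel_AB[of k] by (simp add: algebra_simps)
lemmas nHE = rel_HE
lemmas nHA = rel_HA
lemmas nKA = rel_KA
lemmas nKB = rel_KB

lemma nX: "gg k x * fps_X = fps_X * gg k x" by (simp add: fps_mult_fps_X_commute)
lemma ncs: "gg k x * cs c = cs c * gg k x" by (simp add: cs_central)
lemma ncsX: "cs c * fps_X = fps_X * cs c" by (simp add: fps_mult_fps_X_commute)

lemmas nf0 = nAE nBE nHB nKE nKH nX ncs ncsX
lemmas nf = sw_leg sw_leg_ctx nf0 nf0[THEN ctx_rule0] nBA nBA[THEN ctx_rule_m] nKB nKB[THEN ctx_rule_m]
  nHE nHE[THEN ctx_rule] nHA nHA[THEN ctx_rule] nKA nKA[THEN ctx_rule]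

lemma test1: "(fps_X * (gg 1 Aelt * gg 2 Belt)) * gg 2 Aelt = gg 2 Aelt * (fps_X * (gg 1 Aelt * gg 2 Belt)) - fps_X * (gg 1 Aelt * gg 2 Eelt)"
  by (simp add: algebra_simps nf)

lemma test2: "(gg 0 Hperp + gg 1 Hperp) * (gg 0 Aelt * gg 1 Belt) = (gg 0 Aelt * gg 1 Belt) * (gg 0 Hperp + gg 1 Hperp)"
  by (simp add: algebra_simps nf)


lemmas z0s = nth0_mult qln_nth0

section \<open>Jordanian lemmas\<close>

lemma jconj:
  assumes r1: "h1 * y1 = y1 * h1 + y1" and c1y2: "cm h1 y2" and cy: "cm y1 y2"
    and z1: "fps_nth y1 0 = 0" and z2: "fps_nth y2 0 = 0"
  shows "qexp (h1 * qln y2) * qln (y1 + y2) = (qln y1 + qln y2) * qexp (h1 * qln y2)"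
proof -
  let ?g = "qexp (h1 * qln y2)"
  have a: "?g * y1 = y1 * (1 + y2) * ?g" by (rule conj_pass[OF r1 c1y2 cy z2])
  have "cm ?g y2" by (intro cm_qsub_l cm_mult_l c1y2 cm_refl) (simp_all add: z2 z0s)
  then have b: "?g * y2 = y2 * ?g" by (simp add: cm_def)
  have "?g * (y1 + y2) = (y1 + y2 + y1 * y2) * ?g"
    by (simp only: distrib_left a b) (simp add: algebra_simps)
  then have "?g * qln (y1 + y2) = qln (y1 + y2 + y1 * y2) * ?g"
    by (rule qln_intertwine) (simp_all add: z1 z2 z0s)
  then show ?thesis by (simp only: qln_mult_comm[OF cy z1 z2])
qed

lemma jordanian:
  assumes c01: "cm h0 h1" and c0y1: "cm h0 y1" and c0y2: "cm h0 y2"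
    and r1: "h1 * y1 = y1 * h1 + y1" and c1y2: "cm h1 y2" and cy: "cm y1 y2"
    and z1: "fps_nth y1 0 = 0" and z2: "fps_nth y2 0 = 0"
  shows "qexp (h0 * qln y1) * qexp ((h0 + h1) * qln y2) = qexp (h1 * qln y2) * qexp (h0 * qln (y1 + y2))"
proof -
  let ?s1 = "qln y1" and ?s2 = "qln y2" and ?g = "qexp (h1 * qln y2)"
  have c10: "cm h1 h0" by (rule cm_sym[OF c01])
  have c2y0: "cm y2 h0" by (rule cm_sym[OF c0y2])
  have c1y0: "cm y1 h0" by (rule cm_sym[OF c0y1])
  have c2y1: "cm y2 h1" by (rule cm_sym[OF c1y2])
  have c21: "cm y2 y1" by (rule cm_sym[OF cy])
  have e1: "qexp ((h0 + h1) * ?s2) = qexp (h0 * ?s2) * qexp (h1 * ?s2)"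
    unfolding distrib_right
    by (rule qexp_add_cm) (intro cm_intros c01 c10 c0y2 c2y0 c2y1 c1y2 cm_refl, simp_all add: z2 z0s)
  have e2: "qexp (h0 * ?s1) * qexp (h0 * ?s2) = qexp (h0 * (?s1 + ?s2))"
    unfolding distrib_left
    by (rule qexp_add_cm[symmetric]) (intro cm_intros c0y2 c2y0 c1y0 c0y1 cy c21 cm_refl, simp_all add: z1 z2 z0s)
  have gh0: "?g * h0 = h0 * ?g"
  proof -
    have "cm h0 ?g" by (intro cm_intros c01 c0y2 cm_refl) (simp_all add: z2 z0s)
    then show ?thesis by (simp add: cm_def)
  qed
  have "?g * (h0 * qln (y1 + y2)) = (h0 * (?s1 + ?s2)) * ?g"
    by (simp only: mult.assoc[symmetric] gh0) (simp only: mult.assoc jconj[OF r1 c1y2 cy z1 z2])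
  then have e3: "?g * qexp (h0 * qln (y1 + y2)) = qexp (h0 * (?s1 + ?s2)) * ?g"
    by (rule qexp_intertwine) (simp_all add: z0s)
  show ?thesis
    by (simp only: e1 mult.assoc[symmetric] e2 e3)
qed


abbreviation xX :: "uq fps" where "xX \<equiv> fps_X"
abbreviation hh :: "nat \<Rightarrow> uq fps" where "hh k \<equiv> gg k HP"
abbreviation kk :: "nat \<Rightarrow> uq fps" where "kk k \<equiv> gg k Hperp"
abbreviation aa :: "nat \<Rightarrow> uq fps" where "aa k \<equiv> gg k Aelt"
abbreviation bb :: "nat \<Rightarrow> uq fps" where "bb k \<equiv> gg k Belt"
abbreviation ee :: "nat \<Rightarrow> uq fps" where "ee k \<equiv> gg k Eelt"

lemma ctx: "A * B = C * D \<Longrightarrow> A * (B * Z) = C * (D * (Z::uq fps))"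
  by (simp add: mult.assoc[symmetric])

lemma cm_qexp: "cm P V \<Longrightarrow> fps_nth P 0 = 0 \<Longrightarrow> fps_nth V 0 = 0 \<Longrightarrow> qexp P * qexp V = qexp V * qexp P"
  using cm_qsub_l[OF cm_qsub_r] by (simp add: cm_def)

lemma cm_exp_atom: "cm P V \<Longrightarrow> fps_nth P 0 = 0 \<Longrightarrow> qexp P * V = V * qexp P"
  using cm_qsub_l by (simp add: cm_def)

lemma stJ3: "qexp (hh 0 * qln (xX * ee 1)) * qexp ((hh 0 + hh 1) * qln (xX * ee 2)) =
   qexp (hh 1 * qln (xX * ee 2)) * qexp (hh 0 * qln (xX * (ee 1 + ee 2)))"
proof -
  have "qexp (hh 0 * qln (xX * ee 1)) * qexp ((hh 0 + hh 1) * qln (xX * ee 2)) =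
     qexp (hh 1 * qln (xX * ee 2)) * qexp (hh 0 * qln (xX * ee 1 + xX * ee 2))"
    by (rule jordanian) (unfold cm_def, simp_all add: algebra_simps nf)
  then show ?thesis by (simp only: distrib_left)
qed

lemma stJ2: "qexp (hh 0 * qln (xX * ee 1)) * qexp (xX * ((aa 0 + aa 1) * bb 2)) =
  qexp (xX * ((aa 0 * (1 + xX * ee 1) + aa 1) * bb 2)) * qexp (hh 0 * qln (xX * ee 1))"
proof -
  let ?J = "qexp (hh 0 * qln (xX * ee 1))"
  have jA0: "?J * aa 0 = aa 0 * (1 + xX * ee 1) * ?J"
    by (rule conj_pass) (unfold cm_def, simp_all add: algebra_simps nf)
  have jA1: "?J * aa 1 = aa 1 * ?J"
    by (rule cm_exp_atom) (intro cm_intros cm_base, simp_all add: z0s)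
  have jB2: "?J * bb 2 = bb 2 * ?J"
    by (rule cm_exp_atom) (intro cm_intros cm_base, simp_all add: z0s)
  have jX: "?J * xX = xX * ?J"
    by (rule cm_exp_atom) (intro cm_intros cm_base, simp_all add: z0s)
  have "?J * (xX * ((aa 0 + aa 1) * bb 2)) = (xX * ((aa 0 * (1 + xX * ee 1) + aa 1) * bb 2)) * ?J"
    apply (simp only: distrib_left distrib_right mult.assoc)
    apply (simp only: jX[THEN ctx] jA0[THEN ctx] jA1[THEN ctx] jB2)
    apply (simp add: algebra_simps nf)
    done
  then show ?thesis by (rule qexp_intertwine) (simp_all add: z0s)
qed

lemma stT5: "qexp (xX * (aa 0 * bb 1)) * qexp (xX * ((aa 0 * (1 + xX * ee 1) + aa 1) * bb 2)) =
  qexp (xX * ((aa 0 + aa 1) * bb 2)) * qexp (xX * (aa 0 * bb 1))"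
proof -
  let ?X = "xX * (aa 0 * bb 1)" and ?Y = "xX * ((aa 0 * (1 + xX * ee 1) + aa 1) * bb 2)"
    and ?C = "- (xX * (xX * (aa 0 * (ee 1 * bb 2))))"
  have s: "?X * ?Y = ?Y * ?X + ?C" by (simp add: algebra_simps nf)
  have c: "?X * ?C = ?C * ?X" by (simp add: algebra_simps nf)
  have "qexp ?X * ?Y = (?Y + ?C) * qexp ?X" by (rule qexp_shift[OF s c]) (simp add: z0s)
  then have "qexp ?X * qexp ?Y = qexp (?Y + ?C) * qexp ?X" by (rule qexp_intertwine) (simp_all add: z0s)
  moreover have "?Y + ?C = xX * ((aa 0 + aa 1) * bb 2)" by (simp add: algebra_simps nf)
  ultimately show ?thesis by simp
qed

lemma stT6: "qexp (xX * ((aa 0 + aa 1) * bb 2)) * qexp (xX * (aa 0 * bb 1)) =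
  qexp (xX * (aa 1 * bb 2)) * qexp (xX * (aa 0 * (bb 1 + bb 2)))"
proof -
  have a: "qexp (xX * ((aa 0 + aa 1) * bb 2)) = qexp (xX * (aa 0 * bb 2)) * qexp (xX * (aa 1 * bb 2))"
    unfolding distrib_left distrib_right
    by (rule qexp_add_cm) (intro cm_intros cm_base, simp_all add: z0s)
  have b: "qexp (xX * (aa 0 * (bb 1 + bb 2))) = qexp (xX * (aa 0 * bb 1)) * qexp (xX * (aa 0 * bb 2))"
    unfolding distrib_left distrib_right
    by (rule qexp_add_cm) (intro cm_intros cm_base, simp_all add: z0s)
  have c1: "qexp (xX * (aa 0 * bb 2)) * qexp (xX * (aa 1 * bb 2)) = qexp (xX * (aa 1 * bb 2)) * qexp (xX * (aa 0 * bb 2))"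
    by (rule cm_qexp) (intro cm_intros cm_base, simp_all add: z0s)
  have c2: "qexp (xX * (aa 0 * bb 2)) * qexp (xX * (aa 0 * bb 1)) = qexp (xX * (aa 0 * bb 1)) * qexp (xX * (aa 0 * bb 2))"
    by (rule cm_qexp) (intro cm_intros cm_base, simp_all add: z0s)
  show ?thesis by (simp only: a b c1 mult.assoc c2)
qed

lemma stJ7b: "qexp (hh 1 * qln (xX * ee 2)) * qexp (xX * (aa 0 * (bb 1 + bb 2))) =
  qexp (xX * (aa 0 * (bb 1 + bb 2))) * qexp (hh 1 * qln (xX * ee 2))"
  by (rule cm_qexp) (intro cm_intros cm_base, simp_all add: z0s)


lemma move2:
  assumes "g * k = k * g" "g * M = M' * (g::uq fps)"
  shows "g * (k * M) = (k * M') * g"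
proof -
  have "g * (k * M) = (g * k) * M" by (simp only: mult.assoc)
  also have "\<dots> = k * (g * M)" by (simp only: assms(1) mult.assoc)
  also have "\<dots> = (k * M') * g" by (simp only: assms(2) mult.assoc)
  finally show ?thesis .
qed

section \<open>The JE case\<close>

lemma JE_J1: "qexp (hh 0 * qln (xX * ee 1)) * qexp ((kk 0 + kk 1) * qln (xX * cs c * aa 2)) =
  qexp ((kk 0 + kk 1) * qln (xX * cs c * aa 2)) * qexp (hh 0 * qln (xX * ee 1))"
  by (rule cm_qexp) (intro cm_intros cm_base, simp_all add: z0s)

lemma JE_T4: "qexp (xX * (aa 0 * bb 1)) * qexp ((kk 0 + kk 1) * qln (xX * cs c * aa 2)) =
  qexp ((kk 0 + kk 1) * qln (xX * cs c * aa 2)) * qexp (xX * (aa 0 * bb 1))"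
proof -
  have c: "cm (xX * (aa 0 * bb 1)) (kk 0 + kk 1)" unfolding cm_def by (simp add: algebra_simps nf)
  have c2: "cm (xX * (aa 0 * bb 1)) (qln (xX * cs c * aa 2))" by (intro cm_intros cm_base) (simp_all add: z0s)
  show ?thesis by (rule cm_qexp[OF cm_mult_r[OF c c2]]) (simp_all add: z0s)
qed

lemma JE_J7a: "qexp (hh 1 * qln (xX * ee 2)) * qexp (kk 0 * qln (xX * cs c * (aa 1 + aa 2))) =
  qexp (kk 0 * qln (xX * cs c * (aa 1 * (1 + xX * ee 2) + aa 2))) * qexp (hh 1 * qln (xX * ee 2))"
proof -
  let ?J = "qexp (hh 1 * qln (xX * ee 2))"
  have jA1: "?J * aa 1 = aa 1 * (1 + xX * ee 2) * ?J"
    by (rule conj_pass) (unfold cm_def, simp_all add: algebra_simps nf)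
  have jA2: "?J * aa 2 = aa 2 * ?J"
    by (rule cm_exp_atom) (intro cm_intros cm_base, simp_all add: z0s)
  have jX: "?J * xX = xX * ?J"
    by (rule cm_exp_atom) (intro cm_intros cm_base, simp_all add: z0s)
  have jcs: "?J * cs c = cs c * ?J"
    by (rule cm_exp_atom) (intro cm_intros cm_base, simp_all add: z0s)
  have jK0: "?J * kk 0 = kk 0 * ?J"
    by (rule cm_exp_atom) (intro cm_intros cm_base, simp_all add: z0s)
  have "?J * (xX * cs c * (aa 1 + aa 2)) = (xX * cs c * (aa 1 * (1 + xX * ee 2) + aa 2)) * ?J"
    apply (simp only: distrib_left distrib_right mult.assoc)
    apply (simp only: jX[THEN ctx] jcs[THEN ctx] jA1 jA2)
    apply (simp add: algebra_simps nf)
    done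
  then have q: "?J * qln (xX * cs c * (aa 1 + aa 2)) = qln (xX * cs c * (aa 1 * (1 + xX * ee 2) + aa 2)) * ?J"
    by (rule qln_intertwine) (simp_all add: z0s)
  have "?J * (kk 0 * qln (xX * cs c * (aa 1 + aa 2))) = (kk 0 * qln (xX * cs c * (aa 1 * (1 + xX * ee 2) + aa 2))) * ?J"
    by (rule move2[OF jK0 q])
  then show ?thesis by (rule qexp_intertwine) (simp_all add: z0s)
qed

lemma JE_T8: "qexp (xX * (aa 1 * bb 2)) * qexp (kk 0 * qln (xX * cs c * (aa 1 * (1 + xX * ee 2) + aa 2))) =
  qexp (kk 0 * qln (xX * cs c * (aa 1 + aa 2))) * qexp (xX * (aa 1 * bb 2))"
proof -
  let ?T = "qexp (xX * (aa 1 * bb 2))"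
  have s: "(xX * (aa 1 * bb 2)) * aa 2 = aa 2 * (xX * (aa 1 * bb 2)) + - (xX * (aa 1 * ee 2))"
    by (simp add: algebra_simps nf)
  have c: "(xX * (aa 1 * bb 2)) * - (xX * (aa 1 * ee 2)) = - (xX * (aa 1 * ee 2)) * (xX * (aa 1 * bb 2))"
    by (simp add: algebra_simps nf)
  have tA2: "?T * aa 2 = (aa 2 + - (xX * (aa 1 * ee 2))) * ?T"
    by (rule qexp_shift[OF s c]) (simp add: z0s)
  have tA1: "?T * aa 1 = aa 1 * ?T"
    by (rule cm_exp_atom) (intro cm_intros cm_base, simp_all add: z0s)
  have tE2: "?T * ee 2 = ee 2 * ?T"
    by (rule cm_exp_atom) (intro cm_intros cm_base, simp_all add: z0s)
  have tX: "?T * xX = xX * ?T"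
    by (rule cm_exp_atom) (intro cm_intros cm_base, simp_all add: z0s)
  have tcs: "?T * cs c = cs c * ?T"
    by (rule cm_exp_atom) (intro cm_intros cm_base, simp_all add: z0s)
  have tK0: "?T * kk 0 = kk 0 * ?T"
    by (rule cm_exp_atom) (intro cm_intros cm_base, simp_all add: z0s)
  have "?T * (xX * cs c * (aa 1 * (1 + xX * ee 2) + aa 2)) = (xX * cs c * (aa 1 + aa 2)) * ?T"
    apply (simp only: distrib_left distrib_right mult.assoc mult_1_right)
    apply (simp only: tX[THEN ctx] tcs[THEN ctx] tA1[THEN ctx] tA1 tE2 tA2)
    apply (simp add: algebra_simps nf)
    done
  then have q: "?T * qln (xX * cs c * (aa 1 * (1 + xX * ee 2) + aa 2)) = qln (xX * cs c * (aa 1 + aa 2)) * ?T"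
    by (rule qln_intertwine) (simp_all add: z0s)
  have "?T * (kk 0 * qln (xX * cs c * (aa 1 * (1 + xX * ee 2) + aa 2))) = (kk 0 * qln (xX * cs c * (aa 1 + aa 2))) * ?T"
    by (rule move2[OF tK0 q])
  then show ?thesis by (rule qexp_intertwine) (simp_all add: z0s)
qed

lemma JE_P9: "qexp (kk 0 * qln (xX * cs c * aa 1)) * qexp ((kk 0 + kk 1) * qln (xX * cs c * aa 2)) =
  qexp (kk 1 * qln (xX * cs c * aa 2)) * qexp (kk 0 * qln (xX * cs c * (aa 1 + aa 2)))"
proof -
  have "qexp (kk 0 * qln (xX * cs c * aa 1)) * qexp ((kk 0 + kk 1) * qln (xX * cs c * aa 2)) =
    qexp (kk 1 * qln (xX * cs c * aa 2)) * qexp (kk 0 * qln (xX * cs c * aa 1 + xX * cs c * aa 2))"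
    by (rule jordanian) (unfold cm_def, simp_all add: algebra_simps nf)
  then show ?thesis by (simp only: distrib_left)
qed

lemma JE_main:
  "(qexp (kk 0 * qln (xX * cs c * aa 1)) * qexp (xX * (aa 0 * bb 1)) * qexp (hh 0 * qln (xX * ee 1))) *
   (qexp ((kk 0 + kk 1) * qln (xX * cs c * aa 2)) * qexp (xX * ((aa 0 + aa 1) * bb 2)) * qexp ((hh 0 + hh 1) * qln (xX * ee 2)))
 = (qexp (kk 1 * qln (xX * cs c * aa 2)) * qexp (xX * (aa 1 * bb 2)) * qexp (hh 1 * qln (xX * ee 2))) *
   (qexp (kk 0 * qln (xX * cs c * (aa 1 + aa 2))) * qexp (xX * (aa 0 * (bb 1 + bb 2))) * qexp (hh 0 * qln (xX * (ee 1 + ee 2))))"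
  (is "(?P01 * ?T01 * ?J01) * (?P2 * ?T2 * ?J2) = (?P12 * ?T12 * ?J12) * (?Q0 * ?S0 * ?I0)")
proof -
  let ?T2' = "qexp (xX * ((aa 0 * (1 + xX * ee 1) + aa 1) * bb 2))"
  let ?Q0' = "qexp (kk 0 * qln (xX * cs c * (aa 1 * (1 + xX * ee 2) + aa 2)))"
  have "(?P01 * ?T01 * ?J01) * (?P2 * ?T2 * ?J2) = ?P01 * (?T01 * (?J01 * (?P2 * (?T2 * ?J2))))"
    by (simp only: mult.assoc)
  also have "\<dots> = ?P01 * (?T01 * (?P2 * (?J01 * (?T2 * ?J2))))"
    by (simp only: ctx[OF JE_J1])
  also have "\<dots> = ?P01 * (?T01 * (?P2 * (?T2' * (?J01 * ?J2))))"
    by (simp only: ctx[OF stJ2])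
  also have "\<dots> = ?P01 * (?T01 * (?P2 * (?T2' * (?J12 * ?I0))))"
    by (simp only: stJ3)
  also have "\<dots> = ?P01 * (?P2 * (?T01 * (?T2' * (?J12 * ?I0))))"
    by (simp only: ctx[OF JE_T4])
  also have "\<dots> = ?P01 * (?P2 * (?T2 * (?T01 * (?J12 * ?I0))))"
    by (simp only: ctx[OF stT5])
  also have "\<dots> = ?P01 * (?P2 * (?T12 * (?S0 * (?J12 * ?I0))))"
    by (simp only: ctx[OF stT6])
  also have "\<dots> = (?P01 * ?P2) * (?T12 * (?S0 * (?J12 * ?I0)))"
    by (simp only: mult.assoc)
  also have "\<dots> = (?P12 * ?Q0) * (?T12 * (?S0 * (?J12 * ?I0)))"
    by (simp only: JE_P9)
  also have "\<dots> = ?P12 * (?Q0 * (?T12 * (?S0 * (?J12 * ?I0))))"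
    by (simp only: mult.assoc)
  also have "\<dots> = ?P12 * (?T12 * (?Q0' * (?S0 * (?J12 * ?I0))))"
    by (simp only: ctx[OF JE_T8, symmetric])
  also have "\<dots> = ?P12 * (?T12 * (?Q0' * (?J12 * (?S0 * ?I0))))"
    by (simp only: ctx[OF stJ7b, symmetric])
  also have "\<dots> = ?P12 * (?T12 * (?J12 * (?Q0 * (?S0 * ?I0))))"
    by (simp only: ctx[OF JE_J7a, symmetric])
  also have "\<dots> = (?P12 * ?T12 * ?J12) * (?Q0 * ?S0 * ?I0)"
    by (simp only: mult.assoc)
  finally show ?thesis .
qed


section \<open>The RE case\<close>

lemma RE_J1: "qexp (hh 0 * qln (xX * ee 1)) * qexp (cs z * (kk 0 + kk 1) * qln (xX * ee 2)) =
  qexp (cs z * (kk 0 + kk 1) * qln (xX * ee 2)) * qexp (hh 0 * qln (xX * ee 1))"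
  by (rule cm_qexp) (intro cm_intros cm_base, simp_all add: z0s)

lemma RE_T4: "qexp (xX * (aa 0 * bb 1)) * qexp (cs z * (kk 0 + kk 1) * qln (xX * ee 2)) =
  qexp (cs z * (kk 0 + kk 1) * qln (xX * ee 2)) * qexp (xX * (aa 0 * bb 1))"
proof -
  have c: "cm (xX * (aa 0 * bb 1)) (kk 0 + kk 1)" unfolding cm_def by (simp add: algebra_simps nf)
  have c1: "cm (xX * (aa 0 * bb 1)) (cs z * (kk 0 + kk 1))" by (rule cm_mult_r[OF cm_cs_r c])
  have c2: "cm (xX * (aa 0 * bb 1)) (qln (xX * ee 2))" by (intro cm_intros cm_base) (simp_all add: z0s)
  show ?thesis by (rule cm_qexp[OF cm_mult_r[OF c1 c2]]) (simp_all add: z0s)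
qed

lemma RE_J7a: "qexp (hh 1 * qln (xX * ee 2)) * qexp (cs z * kk 0 * qln (xX * (ee 1 + ee 2))) =
  qexp (cs z * kk 0 * (qln (xX * ee 1) + qln (xX * ee 2))) * qexp (hh 1 * qln (xX * ee 2))"
proof -
  let ?J = "qexp (hh 1 * qln (xX * ee 2))"
  have q0: "?J * qln (xX * ee 1 + xX * ee 2) = (qln (xX * ee 1) + qln (xX * ee 2)) * ?J"
    by (rule jconj) (unfold cm_def, simp_all add: algebra_simps nf)
  then have q: "?J * qln (xX * (ee 1 + ee 2)) = (qln (xX * ee 1) + qln (xX * ee 2)) * ?J"
    by (simp only: distrib_left)
  have jK: "?J * (cs z * kk 0) = (cs z * kk 0) * ?J"
    by (rule cm_exp_atom) (intro cm_intros cm_base, simp_all add: z0s)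
  have "?J * (cs z * kk 0 * qln (xX * (ee 1 + ee 2))) = (cs z * kk 0 * (qln (xX * ee 1) + qln (xX * ee 2))) * ?J"
    by (rule move2[OF jK q])
  then show ?thesis by (rule qexp_intertwine) (simp_all add: z0s)
qed

lemma RE_T8: "qexp (xX * (aa 1 * bb 2)) * qexp (cs z * kk 0 * (qln (xX * ee 1) + qln (xX * ee 2))) =
  qexp (cs z * kk 0 * (qln (xX * ee 1) + qln (xX * ee 2))) * qexp (xX * (aa 1 * bb 2))"
  by (rule cm_qexp) (intro cm_intros cm_base, simp_all add: z0s)

lemma RE_P9: "qexp (cs z * kk 0 * qln (xX * ee 1)) * qexp (cs z * (kk 0 + kk 1) * qln (xX * ee 2)) =
  qexp (cs z * kk 1 * qln (xX * ee 2)) * qexp (cs z * kk 0 * (qln (xX * ee 1) + qln (xX * ee 2)))"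
proof -
  have l: "qexp (cs z * kk 0 * qln (xX * ee 1)) * qexp (cs z * (kk 0 + kk 1) * qln (xX * ee 2)) =
    qexp (cs z * kk 0 * qln (xX * ee 1) + cs z * (kk 0 + kk 1) * qln (xX * ee 2))"
    by (rule qexp_add_cm[symmetric]) (intro cm_intros cm_base, simp_all add: z0s)
  have r: "qexp (cs z * kk 1 * qln (xX * ee 2)) * qexp (cs z * kk 0 * (qln (xX * ee 1) + qln (xX * ee 2))) =
    qexp (cs z * kk 1 * qln (xX * ee 2) + cs z * kk 0 * (qln (xX * ee 1) + qln (xX * ee 2)))"
    by (rule qexp_add_cm[symmetric]) (intro cm_intros cm_base, simp_all add: z0s)
  have e: "cs z * kk 0 * qln (xX * ee 1) + cs z * (kk 0 + kk 1) * qln (xX * ee 2) =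
    cs z * kk 1 * qln (xX * ee 2) + cs z * kk 0 * (qln (xX * ee 1) + qln (xX * ee 2))"
    by (simp only: distrib_left distrib_right add_ac)
  show ?thesis by (simp only: l r e)
qed

lemma RE_main:
  "(qexp (cs z * kk 0 * qln (xX * ee 1)) * qexp (xX * (aa 0 * bb 1)) * qexp (hh 0 * qln (xX * ee 1))) *
   (qexp (cs z * (kk 0 + kk 1) * qln (xX * ee 2)) * qexp (xX * ((aa 0 + aa 1) * bb 2)) * qexp ((hh 0 + hh 1) * qln (xX * ee 2)))
 = (qexp (cs z * kk 1 * qln (xX * ee 2)) * qexp (xX * (aa 1 * bb 2)) * qexp (hh 1 * qln (xX * ee 2))) *
   (qexp (cs z * kk 0 * qln (xX * (ee 1 + ee 2))) * qexp (xX * (aa 0 * (bb 1 + bb 2))) * qexp (hh 0 * qln (xX * (ee 1 + ee 2))))"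
  (is "(?P01 * ?T01 * ?J01) * (?P2 * ?T2 * ?J2) = (?P12 * ?T12 * ?J12) * (?Q0 * ?S0 * ?I0)")
proof -
  let ?T2' = "qexp (xX * ((aa 0 * (1 + xX * ee 1) + aa 1) * bb 2))"
  let ?Q0' = "qexp (cs z * kk 0 * (qln (xX * ee 1) + qln (xX * ee 2)))"
  have "(?P01 * ?T01 * ?J01) * (?P2 * ?T2 * ?J2) = ?P01 * (?T01 * (?J01 * (?P2 * (?T2 * ?J2))))"
    by (simp only: mult.assoc)
  also have "\<dots> = ?P01 * (?T01 * (?P2 * (?J01 * (?T2 * ?J2))))"
    by (simp only: ctx[OF RE_J1])
  also have "\<dots> = ?P01 * (?T01 * (?P2 * (?T2' * (?J01 * ?J2))))"
    by (simp only: ctx[OF stJ2])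
  also have "\<dots> = ?P01 * (?T01 * (?P2 * (?T2' * (?J12 * ?I0))))"
    by (simp only: stJ3)
  also have "\<dots> = ?P01 * (?P2 * (?T01 * (?T2' * (?J12 * ?I0))))"
    by (simp only: ctx[OF RE_T4])
  also have "\<dots> = ?P01 * (?P2 * (?T2 * (?T01 * (?J12 * ?I0))))"
    by (simp only: ctx[OF stT5])
  also have "\<dots> = ?P01 * (?P2 * (?T12 * (?S0 * (?J12 * ?I0))))"
    by (simp only: ctx[OF stT6])
  also have "\<dots> = (?P01 * ?P2) * (?T12 * (?S0 * (?J12 * ?I0)))"
    by (simp only: mult.assoc)
  also have "\<dots> = (?P12 * ?Q0') * (?T12 * (?S0 * (?J12 * ?I0)))"
    by (simp only: RE_P9)
  also have "\<dots> = ?P12 * (?Q0' * (?T12 * (?S0 * (?J12 * ?I0))))"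
    by (simp only: mult.assoc)
  also have "\<dots> = ?P12 * (?T12 * (?Q0' * (?S0 * (?J12 * ?I0))))"
    by (simp only: ctx[OF RE_T8, symmetric])
  also have "\<dots> = ?P12 * (?T12 * (?Q0' * (?J12 * (?S0 * ?I0))))"
    by (simp only: ctx[OF stJ7b, symmetric])
  also have "\<dots> = ?P12 * (?T12 * (?J12 * (?Q0 * (?S0 * ?I0))))"
    by (simp only: ctx[OF RE_J7a, symmetric])
  also have "\<dots> = (?P12 * ?T12 * ?J12) * (?Q0 * ?S0 * ?I0)"
    by (simp only: mult.assoc)
  finally show ?thesis .
qed

section \<open>Transfer from the free algebra\<close>

lemmas push = uf_hom_mult uf_hom_fexp uf_hom_fln1 uf_hom_const uf_hom_X fa_hom_L fa_hom_scal
  fa_hom_mult fa_hom_add Pi_mult Pi_fexp Pi_fln1 Pi_const Pi_X abs_uq_add abs_uq_mult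

lemmas fold = lu_def[symmetric] qs_def[symmetric] gg_def[symmetric] cs_def[symmetric]
  fps_const_add[symmetric] fps_const_mult[symmetric] One_nat_def[symmetric] Suc_1 numeral_2_eq_2[symmetric]

lemma Pi_leg12_JE: "PiQ (leg12 (F_JE c)) =
  qexp (kk 0 * qln (xX * cs c * aa 1)) * qexp (xX * (aa 0 * bb 1)) * qexp (hh 0 * qln (xX * ee 1))"
  unfolding F_JE_def leg12_def tens2_def leg_def U_def Uc_def sigma_def sigmaA_def
  by (simp add: push del: fps_const_add fps_const_mult) (simp only: fold)

lemma Pi_Delta_JE: "PiQ (Delta_id (F_JE c)) =
  qexp ((kk 0 + kk 1) * qln (xX * cs c * aa 2)) * qexp (xX * ((aa 0 + aa 1) * bb 2)) * qexp ((hh 0 + hh 1) * qln (xX * ee 2))"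
  unfolding F_JE_def Delta_id_def tens2_def leg_def U_def Uc_def sigma_def sigmaA_def
  by (simp add: push del: fps_const_add fps_const_mult) (simp only: fold)

lemma Pi_leg23_JE: "PiQ (leg23 (F_JE c)) =
  qexp (kk 1 * qln (xX * cs c * aa 2)) * qexp (xX * (aa 1 * bb 2)) * qexp (hh 1 * qln (xX * ee 2))"
  unfolding F_JE_def leg23_def tens2_def leg_def U_def Uc_def sigma_def sigmaA_def
  by (simp add: push del: fps_const_add fps_const_mult) (simp only: fold)

lemma Pi_idDelta_JE: "PiQ (id_Delta (F_JE c)) =
  qexp (kk 0 * qln (xX * cs c * (aa 1 + aa 2))) * qexp (xX * (aa 0 * (bb 1 + bb 2))) * qexp (hh 0 * qln (xX * (ee 1 + ee 2)))"
  unfolding F_JE_def id_Delta_def tens2_def leg_def U_def Uc_def sigma_def sigmaA_def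
  by (simp add: push del: fps_const_add fps_const_mult) (simp only: fold)

lemma Pi_leg12_RE: "PiQ (leg12 (F_RE z)) =
  qexp (cs z * kk 0 * qln (xX * ee 1)) * qexp (xX * (aa 0 * bb 1)) * qexp (hh 0 * qln (xX * ee 1))"
  unfolding F_RE_def leg12_def tens2_def leg_def U_def Uc_def sigma_def sigmaA_def
  by (simp add: push del: fps_const_add fps_const_mult) (simp only: fold)

lemma Pi_Delta_RE: "PiQ (Delta_id (F_RE z)) =
  qexp (cs z * (kk 0 + kk 1) * qln (xX * ee 2)) * qexp (xX * ((aa 0 + aa 1) * bb 2)) * qexp ((hh 0 + hh 1) * qln (xX * ee 2))"
  unfolding F_RE_def Delta_id_def tens2_def leg_def U_def Uc_def sigma_def sigmaA_def
  by (simp add: push del: fps_const_add fps_const_mult) (simp only: fold)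

lemma Pi_leg23_RE: "PiQ (leg23 (F_RE z)) =
  qexp (cs z * kk 1 * qln (xX * ee 2)) * qexp (xX * (aa 1 * bb 2)) * qexp (hh 1 * qln (xX * ee 2))"
  unfolding F_RE_def leg23_def tens2_def leg_def U_def Uc_def sigma_def sigmaA_def
  by (simp add: push del: fps_const_add fps_const_mult) (simp only: fold)

lemma Pi_idDelta_RE: "PiQ (id_Delta (F_RE z)) =
  qexp (cs z * kk 0 * qln (xX * (ee 1 + ee 2))) * qexp (xX * (aa 0 * (bb 1 + bb 2))) * qexp (hh 0 * qln (xX * (ee 1 + ee 2)))"
  unfolding F_RE_def id_Delta_def tens2_def leg_def U_def Uc_def sigma_def sigmaA_def
  by (simp add: push del: fps_const_add fps_const_mult) (simp only: fold)


section \<open>Invertibility and counit\<close>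

lemma Pi_uminus: "PiQ (- F) = - PiQ F"
  by (rule fps_ext) (simp add: abs_uq_uminus)

lemma inv_ctx: "fps_nth a 0 = 0 \<Longrightarrow> qexp a * (qexp (- a) * Z) = Z"
  by (simp add: mult.assoc[symmetric] qexp_inverse)
lemma inv_ctx': "fps_nth a 0 = 0 \<Longrightarrow> qexp (- a) * (qexp a * Z) = Z"
  by (simp add: mult.assoc[symmetric] qexp_inverse)

lemma inv3:
  assumes z1: "fps_nth X1 0 = 0" and z2: "fps_nth X2 0 = 0" and z3: "fps_nth X3 0 = 0"
  shows "\<exists>G. eqv (fexp X1 * fexp X2 * fexp X3 * G) 1 \<and> eqv (G * (fexp X1 * fexp X2 * fexp X3)) 1"
proof (intro exI conjI)
  have p1: "fps_nth (PiQ X1) 0 = 0" using z1 by simp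
  have p2: "fps_nth (PiQ X2) 0 = 0" using z2 by simp
  have p3: "fps_nth (PiQ X3) 0 = 0" using z3 by simp
  let ?G = "fexp (- X3) * fexp (- X2) * fexp (- X1)"
  show "eqv (fexp X1 * fexp X2 * fexp X3 * ?G) 1"
    unfolding eqv_iff
    by (simp only: Pi_mult Pi_fexp Pi_uminus Pi_one mult.assoc inv_ctx[OF p3] inv_ctx[OF p2] qexp_inverse(1)[OF p1])
  show "eqv (?G * (fexp X1 * fexp X2 * fexp X3)) 1"
    unfolding eqv_iff
    by (simp only: Pi_mult Pi_fexp Pi_uminus Pi_one mult.assoc inv_ctx'[OF p1] inv_ctx'[OF p2] qexp_inverse(2)[OF p3])
qed

lemma fln1_nth0: "fps_nth (fln1 X) 0 = 0" by (simp add: fln1_def)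

lemma qln_zero: "qln 0 = 0"
proof (rule fps_ext)
  fix n
  have "\<forall>m\<in>{..n}. qs (lnc m) * fps_nth ((0::uq fps) ^ m) n = 0"
    by (auto simp: lnc_def power_0_left)
  then show "fps_nth (qln 0) n = fps_nth 0 n" by (simp add: qsub_nth)
qed

lemma z0_tens: "fps_nth (tens2 X (fln1 Y)) 0 = 0"
  by (simp add: tens2_def leg_def fps_mult_nth fln1_nth0)

lemma z0_X: "fps_nth (fps_X * Y) 0 = (0::FA)"
  by simp

theorem twist_JE: "is_twist (F_JE c)"
  unfolding is_twist_def
proof (intro conjI)
  show "\<exists>G. eqv (F_JE c * G) 1 \<and> eqv (G * F_JE c) 1"
    unfolding F_JE_def sigmaA_def sigma_def by (rule inv3) (simp_all only: z0_tens z0_X)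
  show "eqv (leg12 (F_JE c) * Delta_id (F_JE c)) (leg23 (F_JE c) * id_Delta (F_JE c))"
    unfolding eqv_iff Pi_mult Pi_leg12_JE Pi_Delta_JE Pi_leg23_JE Pi_idDelta_JE by (rule JE_main)
  show "eqv (eps_id (F_JE c)) 1"
    unfolding eqv_iff F_JE_def eps_id_def tens2_def leg_def U_def Uc_def sigma_def sigmaA_def
    by (simp add: push Pi_one Pi_zero qexp_zero qln_zero)
  show "eqv (id_eps (F_JE c)) 1"
    unfolding eqv_iff F_JE_def id_eps_def tens2_def leg_def U_def Uc_def sigma_def sigmaA_def
    by (simp add: push Pi_one Pi_zero qexp_zero qln_zero)
qed

theorem twist_RE: "is_twist (F_RE z)"
  unfolding is_twist_def
proof (intro conjI)
  show "\<exists>G. eqv (F_RE z * G) 1 \<and> eqv (G * F_RE z) 1"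
    unfolding F_RE_def sigmaA_def sigma_def by (rule inv3) (simp_all only: z0_tens z0_X)
  show "eqv (leg12 (F_RE z) * Delta_id (F_RE z)) (leg23 (F_RE z) * id_Delta (F_RE z))"
    unfolding eqv_iff Pi_mult Pi_leg12_RE Pi_Delta_RE Pi_leg23_RE Pi_idDelta_RE by (rule RE_main)
  show "eqv (eps_id (F_RE z)) 1"
    unfolding eqv_iff F_RE_def eps_id_def tens2_def leg_def U_def Uc_def sigma_def sigmaA_def
    by (simp add: push Pi_one Pi_zero qexp_zero qln_zero)
  show "eqv (id_eps (F_RE z)) 1"
    unfolding eqv_iff F_RE_def id_eps_def tens2_def leg_def U_def Uc_def sigma_def sigmaA_def
    by (simp add: push Pi_one Pi_zero qexp_zero qln_zero)
qed

theorem mainTheorem9: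
  fixes c \<zeta> :: complex
  shows "is_twist (F_JE c) \<and> is_twist (F_RE \<zeta>)"
  using twist_JE twist_RE by blast


end
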